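(* Let $\Lambda$ be a finite $k$-graph with no sources. For $i\in\{S,T\}$ let $\{f^i_\lambda\}$ be a $\Lambda$-projective system on $(\Lambda^\infty,\mu_i)$ with the standard prefixing and coding maps, and consider the associated monic representations $S_\lambda f=f^S_\lambda\cdot(f\circ\sigma^{d(\lambda)})$ on $L^2(\Lambda^\infty,\mu_S)$ and $T_\lambda f=f^T_\lambda\cdot(f\circ\sigma^{d(\lambda)})$ on $L^2(\Lambda^\infty,\mu_T)$. These representations are unitarily equivalent if and only if $\mu_S$ and $\mu_T$ are equivalent measures and there is a function $h$ on $\Lambda^\infty$ with $$\frac{d\mu_S}{d\mu_T}=|h|^2\qquad\text{and}\qquad f^S_\lambda=\frac{h\circ\sigma^n}{h}\,f^T_\lambda\ \text{ for all }\lambda\in\Lambda^n,\ n\in\mathbb N^k.$$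
   Context: $k$-graph: countable small category with degree $d:\Lambda\to\mathbb N^k$ with unique factorization; finite, no sources. $\Lambda^\infty$ infinite paths with cylinder sets $Z(\lambda)$ and Borel $\sigma$-algebra; standard coding maps $\sigma^m(x)(p,q)=x(p+m,q+m)$ and prefixing maps $\sigma_\lambda(x)=\lambda x$ on $Z(s(\lambda))$. A $\Lambda$-projective system on $(\Lambda^\infty,\mu)$ with standard maps: these maps form a $\Lambda$-semibranching function system (for each $m$, $\{Z(\lambda)\}_{\lambda\in\Lambda^m}$ partitions $\Lambda^\infty$; $\mu(Z(v))>0$; $\mu\circ\sigma_\lambda\ll\mu$ with positive derivative on $Z(s(\lambda))$), plus $f_\lambda\in L^2(\Lambda^\infty,\mu)$ with $|f_\lambda|^2=d(\mu\circ\sigma_\lambda^{-1})/d\mu$ (push-forward, nonzero a.e. on $Z(\lambda)$) and $f_\lambda(f_\nu\circ\sigma^{d(\lambda)})=f_{\lambda\nu}$ when $s(\lambda)=r(\nu)$. Such a system gives a monic representation $f\mapsto f_\lambda\cdot(f\circ\sigma^{d(\lambda)})$ of $C^*(\Lambda)$ (monic: $t_\lambda\neq 0$ and some vector $\xi$ with $\overline{\operatorname{span}}\{t_\lambda t_\lambda^*\xi\}$ the whole space). *)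

theory Defs
  imports "HOL-Analysis.Analysis" "HOL-Library.Function_Algebras"
begin

text \<open>A k-graph: a small category whose objects are identified with identity
  morphisms (the degree-0 morphisms), with degree functor into N^k = ('k => nat),
  'k a finite (nonempty) index type of cardinality k.\<close>

record ('a, 'k) kgraph =
  mor :: "'a set"
  src :: "'a \<Rightarrow> 'a"
  rng :: "'a \<Rightarrow> 'a"
  cmp :: "'a \<Rightarrow> 'a \<Rightarrow> 'a"
  deg :: "'a \<Rightarrow> 'k \<Rightarrow> nat"

definition kgraph :: "('a, 'k::finite) kgraph \<Rightarrow> bool" where
  "kgraph G \<longleftrightarrow>
     countable (mor G) \<and>
     (\<forall>l\<in>mor G. src G l \<in> mor G \<and> rng G l \<in> mor G) \<and>
     (\<forall>l\<in>mor G. src G (src G l) = src G l \<and> rng G (src G l) = src G l \<and>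
                  src G (rng G l) = rng G l \<and> rng G (rng G l) = rng G l) \<and>
     (\<forall>l\<in>mor G. \<forall>n\<in>mor G. src G l = rng G n \<longrightarrow>
         cmp G l n \<in> mor G \<and> rng G (cmp G l n) = rng G l \<and> src G (cmp G l n) = src G n) \<and>
     (\<forall>l\<in>mor G. \<forall>n\<in>mor G. \<forall>m\<in>mor G. src G l = rng G n \<longrightarrow> src G n = rng G m \<longrightarrow>
         cmp G (cmp G l n) m = cmp G l (cmp G n m)) \<and>
     (\<forall>l\<in>mor G. cmp G (rng G l) l = l \<and> cmp G l (src G l) = l) \<and>
     (\<forall>l\<in>mor G. \<forall>n\<in>mor G. src G l = rng G n \<longrightarrow> deg G (cmp G l n) = deg G l + deg G n) \<and>
     (\<forall>l\<in>mor G. \<forall>m n. deg G l = m + n \<longrightarrow>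
         (\<exists>!p. fst p \<in> mor G \<and> snd p \<in> mor G \<and> src G (fst p) = rng G (snd p) \<and>
               deg G (fst p) = m \<and> deg G (snd p) = n \<and> l = cmp G (fst p) (snd p)))"

definition vertices :: "('a, 'k::finite) kgraph \<Rightarrow> 'a set" where
  "vertices G = {v \<in> mor G. deg G v = 0}"

definition finite_kgraph :: "('a, 'k::finite) kgraph \<Rightarrow> bool" where
  "finite_kgraph G \<longleftrightarrow> (\<forall>n. finite {l \<in> mor G. deg G l = n})"

definition no_sources :: "('a, 'k::finite) kgraph \<Rightarrow> bool" where
  "no_sources G \<longleftrightarrow> (\<forall>v\<in>vertices G. \<forall>n. \<exists>l\<in>mor G. rng G l = v \<and> deg G l = n)"

type_synonym ('a, 'k) path = "('k \<Rightarrow> nat) \<Rightarrow> ('k \<Rightarrow> nat) \<Rightarrow> 'a"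

text \<open>Infinite paths: degree-preserving functors \<Omega>_k \<rightarrow> \<Lambda>, where \<Omega>_k has morphisms
  (p,q) with p \<le> q; x p q is undefined outside p \<le> q.\<close>
definition infpaths :: "('a, 'k::finite) kgraph \<Rightarrow> ('a, 'k) path set" where
  "infpaths G = {x.
     (\<forall>p q. p \<le> q \<longrightarrow> x p q \<in> mor G \<and> deg G (x p q) = q - p) \<and>
     (\<forall>p q r. p \<le> q \<longrightarrow> q \<le> r \<longrightarrow>
         src G (x p q) = rng G (x q r) \<and> x p r = cmp G (x p q) (x q r)) \<and>
     (\<forall>p q. \<not> p \<le> q \<longrightarrow> x p q = undefined)}"

definition cyl :: "('a, 'k::finite) kgraph \<Rightarrow> 'a \<Rightarrow> ('a, 'k) path set" where
  "cyl G l = {x \<in> infpaths G. x 0 (deg G l) = l}"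

definition path_sets :: "('a, 'k::finite) kgraph \<Rightarrow> ('a, 'k) path set set" where
  "path_sets G = sigma_sets (infpaths G) (cyl G ` mor G)"

definition shift :: "('k::finite \<Rightarrow> nat) \<Rightarrow> ('a, 'k) path \<Rightarrow> ('a, 'k) path" where
  "shift m x = (\<lambda>p q. x (p + m) (q + m))"

definition prefix :: "('a, 'k::finite) kgraph \<Rightarrow> 'a \<Rightarrow> ('a, 'k) path \<Rightarrow> ('a, 'k) path" where
  "prefix G l x = (THE y. y \<in> infpaths G \<and> y 0 (deg G l) = l \<and> shift (deg G l) y = x)"

definition proj_system ::
  "('a, 'k::finite) kgraph \<Rightarrow> ('a, 'k) path measure \<Rightarrow> ('a \<Rightarrow> ('a, 'k) path \<Rightarrow> complex) \<Rightarrow> bool" where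
  "proj_system G \<mu> f \<longleftrightarrow>
     space \<mu> = infpaths G \<and> sets \<mu> = path_sets G \<and>
     (\<forall>m. \<forall>x\<in>infpaths G. \<exists>!l. l \<in> mor G \<and> deg G l = m \<and> x \<in> cyl G l) \<and>
     (\<forall>v\<in>vertices G. emeasure \<mu> (cyl G v) > 0) \<and>
     (\<forall>l\<in>mor G. \<exists>\<Phi> :: ('a, 'k) path \<Rightarrow> real. \<Phi> \<in> borel_measurable \<mu> \<and>
         (\<forall>x\<in>cyl G (src G l). \<Phi> x > 0) \<and>
         (\<forall>A\<in>sets \<mu>. A \<subseteq> cyl G (src G l) \<longrightarrow>
             prefix G l ` A \<in> sets \<mu> \<and>
             emeasure \<mu> (prefix G l ` A) = (\<integral>\<^sup>+x\<in>A. ennreal (\<Phi> x) \<partial>\<mu>))) \<and>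
     (\<forall>l\<in>mor G. f l \<in> borel_measurable \<mu> \<and> integrable \<mu> (\<lambda>x. (cmod (f l x))\<^sup>2)) \<and>
     (\<forall>l\<in>mor G. \<forall>A\<in>sets \<mu>.
         emeasure \<mu> {x \<in> cyl G (src G l). prefix G l x \<in> A}
           = (\<integral>\<^sup>+x\<in>A. ennreal ((cmod (f l x))\<^sup>2) \<partial>\<mu>)) \<and>
     (\<forall>l\<in>mor G. AE x in \<mu>. x \<in> cyl G l \<longrightarrow> f l x \<noteq> 0) \<and>
     (\<forall>l\<in>mor G. \<forall>n\<in>mor G. src G l = rng G n \<longrightarrow>
         (AE x in \<mu>. f l x * f n (shift (deg G l) x) = f (cmp G l n) x))"

definition rep_op ::
  "('a, 'k::finite) kgraph \<Rightarrow> ('a \<Rightarrow> ('a, 'k) path \<Rightarrow> complex) \<Rightarrow> 'a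
     \<Rightarrow> (('a, 'k) path \<Rightarrow> complex) \<Rightarrow> ('a, 'k) path \<Rightarrow> complex" where
  "rep_op G f l g = (\<lambda>x. f l x * g (shift (deg G l) x))"

definition L2 :: "'b measure \<Rightarrow> ('b \<Rightarrow> complex) set" where
  "L2 \<mu> = {g. g \<in> borel_measurable \<mu> \<and> integrable \<mu> (\<lambda>x. (cmod (g x))\<^sup>2)}"

text \<open>Unitary equivalence: a unitary U : L^2(\<mu>_S) \<rightarrow> L^2(\<mu>_T) (acting on representatives,
  well defined on a.e.-classes, linear, isometric, onto) with U S_\<lambda> = T_\<lambda> U.\<close>
definition unitarily_equiv ::
  "('a, 'k::finite) kgraph \<Rightarrow> ('a, 'k) path measure \<Rightarrow> ('a \<Rightarrow> ('a, 'k) path \<Rightarrow> complex)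
     \<Rightarrow> ('a, 'k) path measure \<Rightarrow> ('a \<Rightarrow> ('a, 'k) path \<Rightarrow> complex) \<Rightarrow> bool" where
  "unitarily_equiv G \<mu>S fS \<mu>T fT \<longleftrightarrow>
    (\<exists>U :: (('a, 'k) path \<Rightarrow> complex) \<Rightarrow> (('a, 'k) path \<Rightarrow> complex).
       (\<forall>g\<in>L2 \<mu>S. U g \<in> L2 \<mu>T) \<and>
       (\<forall>g\<in>L2 \<mu>S. \<forall>g'\<in>L2 \<mu>S. (AE x in \<mu>S. g x = g' x) \<longrightarrow> (AE x in \<mu>T. U g x = U g' x)) \<and>
       (\<forall>g\<in>L2 \<mu>S. \<forall>g'\<in>L2 \<mu>S. \<forall>c. AE x in \<mu>T. U (\<lambda>y. c * g y + g' y) x = c * U g x + U g' x) \<and>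
       (\<forall>g\<in>L2 \<mu>S. (\<integral>x. (cmod (U g x))\<^sup>2 \<partial>\<mu>T) = (\<integral>x. (cmod (g x))\<^sup>2 \<partial>\<mu>S)) \<and>
       (\<forall>g\<in>L2 \<mu>T. \<exists>g'\<in>L2 \<mu>S. AE x in \<mu>T. U g' x = g x) \<and>
       (\<forall>l\<in>mor G. \<forall>g\<in>L2 \<mu>S. AE x in \<mu>T. U (rep_op G fS l g) x = rep_op G fT l (U g) x))"

end

theory Submission
  imports Defs
begin


lemma fun_add_diff: "(p::'k \<Rightarrow> nat) \<le> q \<Longrightarrow> p + (q - p) = q"
  by (simp add: le_fun_def fun_eq_iff)
lemma fun_diff_add: "(p::'k \<Rightarrow> nat) \<le> q \<Longrightarrow> (q - p) + p = q"
  by (simp add: le_fun_def fun_eq_iff)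
lemma fun_le_add1: "(p::'k \<Rightarrow> nat) \<le> p + q"
  by (simp add: le_fun_def)
lemma fun_le_add2: "(p::'k \<Rightarrow> nat) \<le> q + p"
  by (simp add: le_fun_def)
lemma fun_add_diff_cancel: "((p::'k \<Rightarrow> nat) + q) - p = q"
  by (simp add: fun_eq_iff)
lemma fun_add_diff_cancel2: "((q::'k \<Rightarrow> nat) + p) - p = q"
  by (simp add: fun_eq_iff)
lemma fun_add_left_cancel: "((p::'k \<Rightarrow> nat) + q = p + r) = (q = r)"
  by (simp add: fun_eq_iff)
lemma fun_add_le_mono: "(p::'k \<Rightarrow> nat) \<le> q \<Longrightarrow> p + r \<le> q + r"
  by (simp add: le_fun_def)
lemma fun_diff_le: "(p::'k \<Rightarrow> nat) \<le> q \<Longrightarrow> q \<le> r \<Longrightarrow> q - p \<le> r - p"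
  by (simp add: le_fun_def diff_le_mono)
lemma fun_diff_diff: "(p::'k \<Rightarrow> nat) \<le> q \<Longrightarrow> q \<le> r \<Longrightarrow> (r - p) - (q - p) = r - q"
  by (simp add: le_fun_def fun_eq_iff)
lemma fun_add_eq0: "(p::'k \<Rightarrow> nat) + q = p \<Longrightarrow> q = 0"
  by (simp add: fun_eq_iff)
lemma fun_add_eq0': "(q::'k \<Rightarrow> nat) + p = p \<Longrightarrow> q = 0"
  by (simp add: fun_eq_iff)

locale kg =
  fixes G :: "('a, 'k::finite) kgraph"
  assumes KG: "kgraph G"
begin

abbreviation "M \<equiv> mor G"
abbreviation "s \<equiv> src G"
abbreviation "r \<equiv> rng G"
abbreviation "c \<equiv> cmp G"
abbreviation "d \<equiv> deg G"

lemma src_mor: "l \<in> M \<Longrightarrow> s l \<in> M" and rng_mor: "l \<in> M \<Longrightarrow> r l \<in> M"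
  using KG unfolding kgraph_def by auto
lemma ss: "l \<in> M \<Longrightarrow> s (s l) = s l" and rs: "l \<in> M \<Longrightarrow> r (s l) = s l"
  and sr: "l \<in> M \<Longrightarrow> s (r l) = r l" and rr: "l \<in> M \<Longrightarrow> r (r l) = r l"
  using KG unfolding kgraph_def by auto
lemma cmp_mor: "l \<in> M \<Longrightarrow> n \<in> M \<Longrightarrow> s l = r n \<Longrightarrow> c l n \<in> M"
  and cmp_rng: "l \<in> M \<Longrightarrow> n \<in> M \<Longrightarrow> s l = r n \<Longrightarrow> r (c l n) = r l"
  and cmp_src: "l \<in> M \<Longrightarrow> n \<in> M \<Longrightarrow> s l = r n \<Longrightarrow> s (c l n) = s n"
  using KG unfolding kgraph_def by auto
lemma assoc: "l \<in> M \<Longrightarrow> n \<in> M \<Longrightarrow> m \<in> M \<Longrightarrow> s l = r n \<Longrightarrow> s n = r m \<Longrightarrow>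
    c (c l n) m = c l (c n m)"
  using KG unfolding kgraph_def by auto
lemma unit_l: "l \<in> M \<Longrightarrow> c (r l) l = l" and unit_r: "l \<in> M \<Longrightarrow> c l (s l) = l"
  using KG unfolding kgraph_def by auto
lemma deg_cmp: "l \<in> M \<Longrightarrow> n \<in> M \<Longrightarrow> s l = r n \<Longrightarrow> d (c l n) = d l + d n"
  using KG unfolding kgraph_def by auto
lemma ufact: "l \<in> M \<Longrightarrow> d l = m + n \<Longrightarrow>
   (\<exists>!p. fst p \<in> M \<and> snd p \<in> M \<and> s (fst p) = r (snd p) \<and>
               d (fst p) = m \<and> d (snd p) = n \<and> l = c (fst p) (snd p))"
  using KG unfolding kgraph_def by blast

lemma fact_ex: "l \<in> M \<Longrightarrow> d l = m + n \<Longrightarrow>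
   \<exists>a b. a \<in> M \<and> b \<in> M \<and> s a = r b \<and> d a = m \<and> d b = n \<and> l = c a b"
proof -
  assume "l \<in> M" "d l = m + n"
  from ufact[OF this] obtain p where "fst p \<in> M \<and> snd p \<in> M \<and> s (fst p) = r (snd p) \<and>
               d (fst p) = m \<and> d (snd p) = n \<and> l = c (fst p) (snd p)" by (elim ex1E) blast
  then show ?thesis by blast
qed

lemma fact_uniq: "l \<in> M \<Longrightarrow> d l = m + n \<Longrightarrow>
   a \<in> M \<Longrightarrow> b \<in> M \<Longrightarrow> s a = r b \<Longrightarrow> d a = m \<Longrightarrow> d b = n \<Longrightarrow> l = c a b \<Longrightarrow>
   a' \<in> M \<Longrightarrow> b' \<in> M \<Longrightarrow> s a' = r b' \<Longrightarrow> d a' = m \<Longrightarrow> d b' = n \<Longrightarrow> l = c a' b' \<Longrightarrow>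
   a = a' \<and> b = b'"
proof -
  assume h: "l \<in> M" "d l = m + n" and H: "a \<in> M" "b \<in> M" "s a = r b" "d a = m" "d b = n" "l = c a b"
     "a' \<in> M" "b' \<in> M" "s a' = r b'" "d a' = m" "d b' = n" "l = c a' b'"
  from ufact[OF h] obtain p where "\<forall>q. (fst q \<in> M \<and> snd q \<in> M \<and> s (fst q) = r (snd q) \<and>
               d (fst q) = m \<and> d (snd q) = n \<and> l = c (fst q) (snd q)) \<longrightarrow> q = p" by (elim ex1E) blast
  from this[rule_format, of "(a,b)"] this[rule_format, of "(a',b')"] H show ?thesis by auto
qed

lemma deg_src: "l \<in> M \<Longrightarrow> d (s l) = 0"
proof -
  assume l: "l \<in> M"
  have "d l = d l + d (s l)" using deg_cmp[OF l src_mor[OF l] rs[OF l, symmetric]] unit_r[OF l] by simp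
  then show ?thesis by (metis fun_add_eq0)
qed
lemma deg_rng: "l \<in> M \<Longrightarrow> d (r l) = 0"
proof -
  assume l: "l \<in> M"
  have "d l = d (r l) + d l" using deg_cmp[OF rng_mor[OF l] l sr[OF l]] unit_l[OF l] by simp
  then show ?thesis by (metis fun_add_eq0')
qed

lemma vertex: assumes v: "v \<in> M" "d v = 0" shows "s v = v" "r v = v"
proof -
  have "d v = 0 + 0" using v by simp
  from fact_uniq[OF v(1) this rng_mor[OF v(1)] v(1) sr[OF v(1)] deg_rng[OF v(1)] v(2) unit_l[OF v(1), symmetric]
       v(1) src_mor[OF v(1)] rs[OF v(1), symmetric] v(2) deg_src[OF v(1)] unit_r[OF v(1), symmetric]]
  show "s v = v" "r v = v" by auto
qed


definition seg :: "'a \<Rightarrow> ('k \<Rightarrow> nat) \<Rightarrow> ('k \<Rightarrow> nat) \<Rightarrow> 'a" where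
  "seg w p q = (THE b. \<exists>a e. a \<in> M \<and> b \<in> M \<and> e \<in> M \<and> s a = r b \<and> s b = r e \<and>
       d a = p \<and> d b = q - p \<and> w = c (c a b) e)"

lemma seg_uniq_aux:
  assumes "a \<in> M" "b \<in> M" "e \<in> M" "s a = r b" "s b = r e" "d a = p" "d b = q - p" "w = c (c a b) e"
    and "a' \<in> M" "b' \<in> M" "e' \<in> M" "s a' = r b'" "s b' = r e'" "d a' = p" "d b' = q - p" "w = c (c a' b') e'"
  shows "b = b'"
proof -
  have ab: "c a b \<in> M" "s (c a b) = r e" using assms cmp_mor cmp_src by auto
  have ab': "c a' b' \<in> M" "s (c a' b') = r e'" using assms cmp_mor cmp_src by auto
  have dab: "d (c a b) = d (c a' b')" using deg_cmp[of a b] deg_cmp[of a' b'] assms(1,2,4,6,7,9,10,12,14,15) by simp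
  have dw: "d w = d (c a b) + d e" using assms ab deg_cmp by simp
  have dw': "d w = d (c a b) + d e'" using deg_cmp[OF ab'(1) assms(11) ab'(2)] assms(16) dab by simp
  have de: "d e = d e'" using dw dw' by simp
  have wM: "w \<in> M" using cmp_mor[OF ab(1) assms(3) ab(2)] assms(8) by simp
  have "c a b = c a' b'"
    using fact_uniq[OF wM dw ab(1) assms(3) ab(2) refl refl assms(8) ab'(1) assms(11) ab'(2) dab[symmetric] de[symmetric] assms(16)]
    by simp
  then show ?thesis
    using fact_uniq[OF ab(1) deg_cmp[OF assms(1,2,4)] assms(1,2,4) refl refl refl assms(9,10,12)] assms by auto
qed

lemma seg_eq:
  assumes "a \<in> M" "b \<in> M" "e \<in> M" "s a = r b" "s b = r e" "p = d a" "q = d a + d b" "w = c (c a b) e"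
  shows "seg w p q = b"
proof -
  have dq: "d b = q - p" using assms by (simp add: fun_add_diff_cancel)
  show ?thesis unfolding seg_def
    apply (rule the_equality)
    using assms dq apply blast
    using seg_uniq_aux[OF assms(1-5) assms(6)[symmetric] dq assms(8)] by blast
qed

lemma seg_eq':
  assumes "a \<in> M" "b \<in> M" "e \<in> M" "s a = r b" "s b = r e" "d a = p" "d b = q - p" "p \<le> q" "w = c (c a b) e"
  shows "seg w p q = b"
  using seg_eq[OF assms(1-5) assms(6)[symmetric] _ assms(9)] assms(6-8) fun_add_diff by metis

lemma seg_ex:
  assumes w: "w \<in> M" and pq: "p \<le> q" "q \<le> d w"
  shows "\<exists>a b e. a \<in> M \<and> b \<in> M \<and> e \<in> M \<and> s a = r b \<and> s b = r e \<and>
       d a = p \<and> d b = q - p \<and> w = c (c a b) e"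
proof -
  obtain A e where Ae: "A \<in> M" "e \<in> M" "s A = r e" "d A = q" "d e = d w - q" "w = c A e"
    using fact_ex[OF w, of q "d w - q"] pq fun_add_diff by metis
  obtain a b where ab: "a \<in> M" "b \<in> M" "s a = r b" "d a = p" "d b = q - p" "A = c a b"
    using fact_ex[OF Ae(1), of p "q - p"] pq fun_add_diff Ae(4) by metis
  have "s b = r e" using ab Ae cmp_src by metis
  then show ?thesis using ab Ae by blast
qed

lemma seg_mor:
  assumes w: "w \<in> M" and pq: "p \<le> q" "q \<le> d w"
  shows "seg w p q \<in> M" "d (seg w p q) = q - p"
proof -
  obtain a b e where H: "a \<in> M \<and> b \<in> M \<and> e \<in> M \<and> s a = r b \<and> s b = r e \<and>
       d a = p \<and> d b = q - p \<and> w = c (c a b) e" using seg_ex[OF assms] by blast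
  then have "seg w p q = b" using seg_eq'[of a b e p q w] pq by auto
  then show "seg w p q \<in> M" "d (seg w p q) = q - p" using H by auto
qed

lemma seg_ext:
  assumes w: "w \<in> M" and z: "z \<in> M" "s w = r z" and pq: "p \<le> q" "q \<le> d w"
  shows "seg (c w z) p q = seg w p q"
proof -
  obtain a b e where H: "a \<in> M" "b \<in> M" "e \<in> M" "s a = r b" "s b = r e"
       "d a = p" "d b = q - p" "w = c (c a b) e" using seg_ex[OF w pq] by blast
  have sw: "seg w p q = b" using seg_eq'[OF H(1-7) pq(1) H(8)] .
  have ab: "c a b \<in> M" "s (c a b) = r e" using H cmp_mor cmp_src by auto
  have se: "s e = r z" using z H ab cmp_src by metis
  have "c w z = c (c a b) (c e z)" using assoc[OF ab(1) H(3) z(1) ab(2) se] H by simp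
  moreover have "r (c e z) = r e" using cmp_rng H z se by auto
  ultimately have "seg (c w z) p q = b"
    using seg_eq'[OF H(1,2) cmp_mor[OF H(3) z(1) se] H(4) _ H(6,7) pq(1)] H by auto
  then show ?thesis using sw by simp
qed

lemma seg_split:
  assumes w: "w \<in> M" and pq: "p \<le> q" "q \<le> t" "t \<le> d w"
  shows "seg w p t = c (seg w p q) (seg w q t) \<and> s (seg w p q) = r (seg w q t)"
proof -
  have "p \<le> t" using pq(1,2) by (rule order.trans)
  then obtain a B e where H: "a \<in> M" "B \<in> M" "e \<in> M" "s a = r B" "s B = r e"
       "d a = p" "d B = t - p" "w = c (c a B) e" using seg_ex[OF w _ pq(3)] by blast
  have "d B = (q - p) + (t - q)" using H(7) pq by (simp add: le_fun_def fun_eq_iff)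
  then obtain b1 b2 where b: "b1 \<in> M" "b2 \<in> M" "s b1 = r b2" "d b1 = q - p" "d b2 = t - q" "B = c b1 b2"
    using fact_ex[OF H(2)] by metis
  have swpt: "seg w p t = B" using seg_eq'[OF H(1-7) \<open>p \<le> t\<close> H(8)] .
  have rB: "r B = r b1" using b cmp_rng by auto
  have sB: "s B = s b2" using b cmp_src by auto
  have ab1: "c a b1 \<in> M" "s (c a b1) = r b2" "r (c a b1) = r a" using H b rB cmp_mor cmp_src cmp_rng by auto
  have b2e: "c b2 e \<in> M" "r (c b2 e) = r b2" using H b sB cmp_mor cmp_rng by auto
  have w1: "w = c (c a b1) (c b2 e)"
  proof -
    have "c a B = c (c a b1) b2" using assoc[OF H(1) b(1) b(2)] H b rB by simp
    then have "w = c (c (c a b1) b2) e" using H by simp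
    also have "\<dots> = c (c a b1) (c b2 e)" using assoc[OF ab1(1) b(2) H(3) ab1(2)] H sB by simp
    finally show ?thesis .
  qed
  have s1: "seg w p q = b1"
    using seg_eq'[OF H(1) b(1) b2e(1) _ _ H(6) b(4) pq(1) w1] H b rB b2e by auto
  have w2: "w = c (c (c a b1) b2) e"
  proof -
    have "c a B = c (c a b1) b2" using assoc[OF H(1) b(1) b(2)] H b rB by simp
    then show ?thesis using H by simp
  qed
  have dab1: "d (c a b1) = q" using deg_cmp[OF H(1) b(1)] H b rB pq fun_add_diff by auto
  have s2: "seg w q t = b2"
    using seg_eq'[OF ab1(1) b(2) H(3) ab1(2) _ dab1 b(5) pq(2) w2] H b sB by auto
  show ?thesis using swpt s1 s2 b by simp
qed

lemma seg_all: "w \<in> M \<Longrightarrow> seg w 0 (d w) = w"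
proof -
  assume w: "w \<in> M"
  have "w = c (c (r w) w) (s w)" using unit_l unit_r w by simp
  then show ?thesis using seg_eq[OF rng_mor[OF w] w src_mor[OF w] sr[OF w] rs[OF w, symmetric]]
    deg_rng[OF w] by simp
qed

abbreviation "\<Omega> \<equiv> infpaths G"

lemma path_mor: "x \<in> \<Omega> \<Longrightarrow> p \<le> q \<Longrightarrow> x p q \<in> M \<and> d (x p q) = q - p"
  unfolding infpaths_def by blast
lemma path_comp: "x \<in> \<Omega> \<Longrightarrow> p \<le> q \<Longrightarrow> q \<le> t \<Longrightarrow> s (x p q) = r (x q t) \<and> x p t = c (x p q) (x q t)"
  unfolding infpaths_def by blast
lemma path_undef: "x \<in> \<Omega> \<Longrightarrow> \<not> p \<le> q \<Longrightarrow> x p q = undefined"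
  unfolding infpaths_def by blast
lemma path_vertex: "x \<in> \<Omega> \<Longrightarrow> s (x q q) = x q q \<and> r (x q q) = x q q"
  using path_mor[of x q q] vertex by auto
lemma path_src: "x \<in> \<Omega> \<Longrightarrow> p \<le> q \<Longrightarrow> s (x p q) = x q q"
  using path_comp[of x p q q] path_vertex by auto
lemma path_rng: "x \<in> \<Omega> \<Longrightarrow> p \<le> q \<Longrightarrow> r (x p q) = x p p"
  using path_comp[of x p p q] path_vertex by auto

lemma seg_path: assumes x: "x \<in> \<Omega>" and pq: "p \<le> q" "q \<le> N" shows "seg (x 0 N) p q = x p q"
proof -
  have p0: "0 \<le> p" by (simp add: le_fun_def)
  have e1: "x 0 q = c (x 0 p) (x p q)" "s (x 0 p) = r (x p q)" using path_comp[OF x p0 pq(1)] by auto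
  have e2: "x 0 N = c (x 0 q) (x q N)" "s (x 0 q) = r (x q N)" using path_comp[OF x _ pq(2)] p0 pq order.trans by blast+
  have "s (x p q) = r (x q N)" using path_comp[OF x pq] by auto
  then show ?thesis using seg_eq'[of "x 0 p" "x p q" "x q N" p q "x 0 N"] e1 e2 path_mor[OF x] p0 pq
    by (simp add: fun_add_diff order.trans)
qed

lemma in_cyl: "x \<in> \<Omega> \<Longrightarrow> x \<in> cyl G (x 0 q)"
  unfolding cyl_def using path_mor[of x 0 q] by (simp add: le_fun_def)

lemma cyl_sub: "cyl G l \<subseteq> \<Omega>" unfolding cyl_def by auto
lemma cyl_nonmor: "l \<notin> M \<Longrightarrow> cyl G l = {}"
proof -
  assume l: "l \<notin> M"
  { fix x assume "x \<in> cyl G l"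
    then have "x \<in> \<Omega>" "x 0 (d l) = l" unfolding cyl_def by auto
    then have False using path_mor[of x 0 "d l"] l by (simp add: le_fun_def) }
  then show ?thesis by blast
qed
lemma cylD: "x \<in> cyl G l \<Longrightarrow> x \<in> \<Omega> \<and> x 0 (d l) = l" unfolding cyl_def by auto

lemma shift_path: "x \<in> \<Omega> \<Longrightarrow> shift m x \<in> \<Omega>"
proof -
  assume x: "x \<in> \<Omega>"
  have le: "\<And>p q. p \<le> q \<Longrightarrow> p + m \<le> q + m" by (simp add: le_fun_def)
  have nle: "\<And>p q. \<not> p \<le> q \<Longrightarrow> \<not> p + m \<le> q + m" by (simp add: le_fun_def)
  have dd: "\<And>p q. (q + m) - (p + m) = q - p" by (simp add: fun_eq_iff)
  show ?thesis unfolding infpaths_def shift_def mem_Collect_eq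
  proof (intro conjI allI impI)
    fix p q :: "'k \<Rightarrow> nat" assume "p \<le> q"
    then have h: "x (p + m) (q + m) \<in> M \<and> d (x (p + m) (q + m)) = (q + m) - (p + m)"
      by (intro path_mor[OF x] le)
    then show "x (p + m) (q + m) \<in> M" "d (x (p + m) (q + m)) = q - p" by (simp_all only: dd)
  next
    fix p q t :: "'k \<Rightarrow> nat" assume "p \<le> q" "q \<le> t"
    then show "s (x (p + m) (q + m)) = r (x (q + m) (t + m))"
      "x (p + m) (t + m) = c (x (p + m) (q + m)) (x (q + m) (t + m))"
      using path_comp[OF x le[of p q] le[of q t]] by blast+
  next
    fix p q :: "'k \<Rightarrow> nat" assume "\<not> p \<le> q"
    then show "x (p + m) (q + m) = undefined" using path_undef[OF x nle[of p q]] by blast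
  qed
qed


lemma fun_zero_le: "(0::'k \<Rightarrow> nat) \<le> p" by (simp add: le_fun_def)
lemma fun_diff0: "(p::'k \<Rightarrow> nat) - 0 = p" by (simp add: fun_eq_iff)
lemma fun_dd: "((q::'k \<Rightarrow> nat) + m) - (p + m) = q - p" by (simp add: fun_eq_iff)
lemma fun_le_mono: "(p::'k \<Rightarrow> nat) \<le> q \<Longrightarrow> p + m \<le> q + m" by (simp add: le_fun_def)

lemma cyl_mor: "x \<in> cyl G l \<Longrightarrow> l \<in> M" using cyl_nonmor by blast

lemma cyl_src_start: assumes l: "l \<in> M" and x: "x \<in> cyl G (s l)" shows "x \<in> \<Omega>" "x 0 0 = s l"
  using x deg_src[OF l] unfolding cyl_def by auto

definition cat :: "'a \<Rightarrow> ('a, 'k) path \<Rightarrow> ('a, 'k) path" where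
  "cat l x = (\<lambda>p q. if p \<le> q then seg (c l (x 0 q)) p q else undefined)"

lemma W_facts: assumes l: "l \<in> M" and x: "x \<in> cyl G (s l)"
  shows "x 0 q \<in> M" "s l = r (x 0 q)" "c l (x 0 q) \<in> M" "d (c l (x 0 q)) = d l + q"
proof -
  note xx = cyl_src_start[OF l x]
  show a: "x 0 q \<in> M" using path_mor[OF xx(1) fun_zero_le] by blast
  show b: "s l = r (x 0 q)" using path_rng[OF xx(1) fun_zero_le] xx by simp
  show "c l (x 0 q) \<in> M" using cmp_mor[OF l a b] .
  show "d (c l (x 0 q)) = d l + q" using deg_cmp[OF l a b] path_mor[OF xx(1) fun_zero_le] by (simp add: fun_diff0)
qed

lemma cat_path: assumes l: "l \<in> M" and x: "x \<in> cyl G (s l)"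
  shows "cat l x \<in> \<Omega>" "cat l x 0 (d l) = l" "shift (d l) (cat l x) = x"
proof -
  note xx = cyl_src_start[OF l x]
  note W = W_facts[OF l x]
  show "cat l x \<in> \<Omega>" unfolding infpaths_def mem_Collect_eq
  proof (intro conjI allI impI)
    fix p q :: "'k \<Rightarrow> nat" assume pq: "p \<le> q"
    have "q \<le> d (c l (x 0 q))" using W(4) fun_le_add2 by simp
    then show "cat l x p q \<in> M" "d (cat l x p q) = q - p"
      using seg_mor[OF W(3) pq] pq unfolding cat_def by auto
  next
    fix p q t :: "'k \<Rightarrow> nat" assume pq: "p \<le> q" and qt: "q \<le> t"
    have xqt: "x q t \<in> M" "s (x 0 q) = r (x q t)" "x 0 t = c (x 0 q) (x q t)"
      using path_mor[OF xx(1) qt] path_comp[OF xx(1) fun_zero_le qt] by auto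
    have Wt: "c l (x 0 t) = c (c l (x 0 q)) (x q t)"
      using assoc[OF l W(1) xqt(1) W(2) xqt(2)] xqt(3) by simp
    have sW: "s (c l (x 0 q)) = r (x q t)" using cmp_src[OF l W(1) W(2)] xqt by simp
    have qW: "q \<le> d (c l (x 0 q))" using W(4) fun_le_add2 by simp
    have tW: "t \<le> d (c l (x 0 t))" using W_facts(4)[OF l x] fun_le_add2 by simp
    have e1: "seg (c l (x 0 t)) p q = seg (c l (x 0 q)) p q"
      using seg_ext[OF W(3) xqt(1) sW pq qW] Wt by simp
    have ptt: "p \<le> t" using pq qt by (rule order.trans)
    note sp = seg_split[OF W_facts(3)[OF l x, of t] pq qt tW]
    show "s (cat l x p q) = r (cat l x q t)" "cat l x p t = c (cat l x p q) (cat l x q t)"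
      using sp e1 pq qt ptt unfolding cat_def by auto
  next
    fix p q :: "'k \<Rightarrow> nat" assume "\<not> p \<le> q"
    then show "cat l x p q = undefined" unfolding cat_def by simp
  qed
  show "cat l x 0 (d l) = l"
  proof -
    have x0: "x 0 (d l) \<in> M" "s l = r (x 0 (d l))" using W by auto
    have "c l (x 0 (d l)) = c (c (r l) l) (x 0 (d l))" using unit_l[OF l] by simp
    then have "seg (c l (x 0 (d l))) 0 (d l) = l"
      using seg_eq'[OF rng_mor[OF l] l x0(1) sr[OF l] x0(2) deg_rng[OF l] _ fun_zero_le] by (simp add: fun_diff0)
    then show ?thesis unfolding cat_def by (simp add: fun_zero_le)
  qed
  show "shift (d l) (cat l x) = x"
  proof (rule ext, rule ext)
    fix p q :: "'k \<Rightarrow> nat"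
    show "shift (d l) (cat l x) p q = x p q"
    proof (cases "p \<le> q")
      case False
      then have "\<not> p + d l \<le> q + d l" by (simp add: le_fun_def)
      then show ?thesis using False path_undef[OF xx(1)] unfolding shift_def cat_def by simp
    next
      case pq: True
      have qq: "q \<le> q + d l" using fun_le_add1 .
      have A: "x 0 p \<in> M" "s l = r (x 0 p)" "c l (x 0 p) \<in> M" "d (c l (x 0 p)) = d l + p" using W_facts[OF l x] by auto
      have B: "x p q \<in> M" "d (x p q) = q - p" using path_mor[OF xx(1) pq] by auto
      have C: "x q (q + d l) \<in> M" using path_mor[OF xx(1) qq] by auto
      have AB: "s (x 0 p) = r (x p q)" "x 0 q = c (x 0 p) (x p q)" using path_comp[OF xx(1) fun_zero_le pq] by auto
      have BC: "s (x p q) = r (x q (q + d l))" "x p (q + d l) = c (x p q) (x q (q + d l))"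
        using path_comp[OF xx(1) pq qq] by auto
      have X: "x 0 (q + d l) = c (x 0 q) (x q (q + d l))" "s (x 0 q) = r (x q (q + d l))"
        using path_comp[OF xx(1) fun_zero_le qq] by auto
      have cAB: "c (x 0 p) (x p q) \<in> M" using cmp_mor[OF A(1) B(1) AB(1)] .
      have sAB: "s (c (x 0 p) (x p q)) = r (x q (q + d l))" using cmp_src[OF A(1) B(1) AB(1)] BC by simp
      have rAB: "r (c (x 0 p) (x p q)) = r (x 0 p)" using cmp_rng[OF A(1) B(1) AB(1)] .
      have "c l (x 0 (q + d l)) = c l (c (c (x 0 p) (x p q)) (x q (q + d l)))" using X AB by simp
      also have "\<dots> = c (c l (c (x 0 p) (x p q))) (x q (q + d l))"
        using assoc[OF l cAB C _ sAB] A(2) rAB by simp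
      also have "c l (c (x 0 p) (x p q)) = c (c l (x 0 p)) (x p q)"
        using assoc[OF l A(1) B(1) A(2) AB(1)] by simp
      finally have Weq: "c l (x 0 (q + d l)) = c (c (c l (x 0 p)) (x p q)) (x q (q + d l))" .
      have sA': "s (c l (x 0 p)) = r (x p q)" using cmp_src[OF l A(1) A(2)] AB by simp
      have dA: "d (c l (x 0 p)) = p + d l" using A(4) by (simp add: add.commute)
      have dB: "d (x p q) = (q + d l) - (p + d l)" using B(2) by (simp add: fun_dd)
      have "seg (c l (x 0 (q + d l))) (p + d l) (q + d l) = x p q"
        using seg_eq'[OF A(3) B(1) C sA' BC(1) dA dB fun_le_mono[OF pq] Weq] .
      moreover have "p + d l \<le> q + d l" using fun_le_mono[OF pq] .
      ultimately show ?thesis unfolding shift_def cat_def by simp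
    qed
  qed
qed

lemma path_uniq: assumes y: "y \<in> \<Omega>" and y': "y' \<in> \<Omega>" and e0: "y 0 m = y' 0 m"
  and es: "shift m y = shift m y'" shows "y = y'"
proof (rule ext, rule ext)
  fix p q :: "'k \<Rightarrow> nat"
  show "y p q = y' p q"
  proof (cases "p \<le> q")
    case False then show ?thesis using path_undef y y' by metis
  next
    case pq: True
    have qq: "q \<le> q + m" using fun_le_add1 .
    have mq: "m \<le> q + m" using fun_le_add2 .
    have "y m (q + m) = y' m (q + m)" using fun_cong[OF fun_cong[OF es, of 0], of q] unfolding shift_def by simp
    moreover have "y 0 (q + m) = c (y 0 m) (y m (q + m))" "y' 0 (q + m) = c (y' 0 m) (y' m (q + m))"
      using path_comp[OF y fun_zero_le mq] path_comp[OF y' fun_zero_le mq] by auto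
    ultimately have "y 0 (q + m) = y' 0 (q + m)" using e0 by simp
    then show ?thesis using seg_path[OF y pq qq] seg_path[OF y' pq qq] by simp
  qed
qed

lemma prefix_eq: assumes l: "l \<in> M" and x: "x \<in> cyl G (s l)" shows "prefix G l x = cat l x"
  unfolding prefix_def
  apply (rule the_equality)
  using cat_path[OF l x] apply blast
  using cat_path[OF l x] path_uniq by metis

lemma prefix_cyl: assumes l: "l \<in> M" and x: "x \<in> cyl G (s l)"
  shows "prefix G l x \<in> cyl G l" "shift (d l) (prefix G l x) = x"
  using cat_path[OF l x] prefix_eq[OF l x] unfolding cyl_def by auto

lemma prefix_shift: assumes y: "y \<in> cyl G l" shows "prefix G l (shift (d l) y) = y"
  unfolding prefix_def
  apply (rule the_equality)
  using y unfolding cyl_def apply blast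
proof -
  fix ya assume H: "ya \<in> \<Omega> \<and> ya 0 (d l) = l \<and> shift (d l) ya = shift (d l) y"
  show "ya = y" using path_uniq[of ya y "d l"] H cylD[OF y] by auto
qed

lemma shift_cyl: assumes y: "y \<in> cyl G l" shows "shift (d l) y \<in> cyl G (s l)"
proof -
  have l: "l \<in> M" using cyl_mor[OF y] .
  have yy: "y \<in> \<Omega>" "y 0 (d l) = l" using cylD[OF y] by auto
  have "shift (d l) y 0 (d (s l)) = y (d l) (d l)" using deg_src[OF l] unfolding shift_def by simp
  also have "\<dots> = s l" using path_src[OF yy(1) fun_zero_le, of "d l"] yy by simp
  finally show ?thesis using shift_path[OF yy(1)] unfolding cyl_def by simp
qed

lemma prefix_in_cyl_iff: assumes l: "l \<in> M" and x: "x \<in> cyl G (s l)"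
  shows "prefix G l x \<in> cyl G m \<longleftrightarrow> seg (c l (x 0 (d m))) 0 (d m) = m"
proof -
  let ?y = "prefix G l x"
  have y: "?y \<in> \<Omega>" "?y 0 (d l) = l" "shift (d l) ?y = x" using prefix_cyl[OF l x] unfolding cyl_def by auto
  have mm: "d m \<le> d m + d l" using fun_le_add1 .
  have "?y 0 (d m + d l) = c (?y 0 (d l)) (?y (d l) (d m + d l))"
    using path_comp[OF y(1) fun_zero_le fun_le_add2] by blast
  moreover have "?y (d l) (d m + d l) = x 0 (d m)" using fun_cong[OF fun_cong[OF y(3), of 0], of "d m"]
    unfolding shift_def by simp
  ultimately have "?y 0 (d m + d l) = c l (x 0 (d m))" using y by simp
  then have "?y 0 (d m) = seg (c l (x 0 (d m))) 0 (d m)" using seg_path[OF y(1) fun_zero_le mm] by simp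
  then show ?thesis using y unfolding cyl_def by auto
qed

lemma shift_in_cyl_iff: assumes x: "x \<in> \<Omega>"
  shows "shift m x \<in> cyl G l \<longleftrightarrow> seg (x 0 (d l + m)) m (d l + m) = l"
proof -
  have "shift m x 0 (d l) = x m (d l + m)" unfolding shift_def by simp
  also have "\<dots> = seg (x 0 (d l + m)) m (d l + m)" using seg_path[OF x fun_le_add2 order.refl] by simp
  finally show ?thesis using shift_path[OF x] unfolding cyl_def by auto
qed

lemma shift_pre: "shift m -` cyl G l \<inter> \<Omega> = \<Union> (cyl G ` {w \<in> M. d w = d l + m \<and> seg w m (d l + m) = l})"
proof (intro equalityI subsetI)
  fix x assume "x \<in> shift m -` cyl G l \<inter> \<Omega>"
  then have x: "x \<in> \<Omega>" "seg (x 0 (d l + m)) m (d l + m) = l" using shift_in_cyl_iff by auto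
  have "x 0 (d l + m) \<in> M" "d (x 0 (d l + m)) = d l + m" using path_mor[OF x(1) fun_zero_le] by (auto simp: fun_diff0)
  then show "x \<in> \<Union> (cyl G ` {w \<in> M. d w = d l + m \<and> seg w m (d l + m) = l})"
    using x in_cyl[OF x(1)] by blast
next
  fix x assume "x \<in> \<Union> (cyl G ` {w \<in> M. d w = d l + m \<and> seg w m (d l + m) = l})"
  then obtain w where w: "w \<in> M" "d w = d l + m" "seg w m (d l + m) = l" "x \<in> cyl G w" by blast
  then have "x \<in> \<Omega>" "x 0 (d l + m) = w" using cylD[OF w(4)] w(2) by auto
  then show "x \<in> shift m -` cyl G l \<inter> \<Omega>" using shift_in_cyl_iff w by auto
qed

lemma prefix_pre: assumes l: "l \<in> M"
  shows "{x \<in> cyl G (s l). prefix G l x \<in> cyl G m} =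
     cyl G (s l) \<inter> \<Union> (cyl G ` {v \<in> M. d v = d m \<and> seg (c l v) 0 (d m) = m})"
proof (intro equalityI subsetI)
  fix x assume "x \<in> {x \<in> cyl G (s l). prefix G l x \<in> cyl G m}"
  then have x: "x \<in> cyl G (s l)" "seg (c l (x 0 (d m))) 0 (d m) = m" using prefix_in_cyl_iff[OF l] by auto
  have xx: "x \<in> \<Omega>" using cyl_src_start[OF l x(1)] by simp
  have "x 0 (d m) \<in> M" "d (x 0 (d m)) = d m" using path_mor[OF xx fun_zero_le] by (auto simp: fun_diff0)
  then show "x \<in> cyl G (s l) \<inter> \<Union> (cyl G ` {v \<in> M. d v = d m \<and> seg (c l v) 0 (d m) = m})"
    using x in_cyl[OF xx] by blast
next
  fix x assume "x \<in> cyl G (s l) \<inter> \<Union> (cyl G ` {v \<in> M. d v = d m \<and> seg (c l v) 0 (d m) = m})"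
  then obtain v where v: "v \<in> M" "d v = d m" "seg (c l v) 0 (d m) = m" "x \<in> cyl G v" "x \<in> cyl G (s l)" by blast
  then have "x 0 (d m) = v" using cylD[OF v(4)] v(2) by simp
  then show "x \<in> {x \<in> cyl G (s l). prefix G l x \<in> cyl G m}" using prefix_in_cyl_iff[OF l v(5)] v by auto
qed

end


lemma cnj_meas[measurable]: "(v::'a\<Rightarrow>complex) \<in> borel_measurable N \<Longrightarrow> (\<lambda>x. cnj (v x)) \<in> borel_measurable N"
  by (rule borel_measurable_continuous_on[where f=cnj]) (auto intro: continuous_intros)

lemma L2_iff: "g \<in> L2 N \<longleftrightarrow> g \<in> borel_measurable N \<and> integrable N (\<lambda>x. (cmod (g x))\<^sup>2)"
  unfolding L2_def by simp

lemma real_sq_bound: "((x::real) + y)\<^sup>2 \<le> 2 * x\<^sup>2 + 2 * y\<^sup>2"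
proof -
  have "(x + y)\<^sup>2 + (x - y)\<^sup>2 = 2 * x\<^sup>2 + 2 * y\<^sup>2" by (simp add: power2_eq_square algebra_simps)
  then show ?thesis using zero_le_power2[of "x - y"] by linarith
qed

lemma real_prod_bound: "2 * ((x::real) * y) \<le> x\<^sup>2 + y\<^sup>2"
proof -
  have "x\<^sup>2 + y\<^sup>2 - 2 * (x * y) = (x - y)\<^sup>2" by (simp add: power2_eq_square algebra_simps)
  then show ?thesis using zero_le_power2[of "x - y"] by linarith
qed

lemma sq_add_bound: "(cmod (a + b))\<^sup>2 \<le> 2 * (cmod a)\<^sup>2 + 2 * (cmod b)\<^sup>2"
proof -
  have "cmod (a + b) \<le> cmod a + cmod b" by (rule norm_triangle_ineq)
  then have "(cmod (a + b))\<^sup>2 \<le> (cmod a + cmod b)\<^sup>2" by (simp add: power_mono)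
  also have "\<dots> \<le> 2 * (cmod a)\<^sup>2 + 2 * (cmod b)\<^sup>2" by (rule real_sq_bound)
  finally show ?thesis .
qed

lemma L2_add: assumes "u \<in> L2 N" "v \<in> L2 N" shows "(\<lambda>x. u x + v x) \<in> L2 N"
proof -
  have m: "(\<lambda>x. u x + v x) \<in> borel_measurable N" using assms unfolding L2_def by auto
  have "integrable N (\<lambda>x. 2 * (cmod (u x))\<^sup>2 + 2 * (cmod (v x))\<^sup>2)" using assms unfolding L2_def by auto
  then have "integrable N (\<lambda>x. (cmod (u x + v x))\<^sup>2)"
    by (rule Bochner_Integration.integrable_bound) (use m in \<open>auto intro!: AE_I2 simp: sq_add_bound\<close>)
  then show ?thesis using m unfolding L2_def by auto
qed

lemma L2_cmult: assumes "u \<in> L2 N" shows "(\<lambda>x. a * u x) \<in> L2 N"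
proof -
  have m: "(\<lambda>x. a * u x) \<in> borel_measurable N" using assms unfolding L2_def by auto
  have "integrable N (\<lambda>x. (cmod a)\<^sup>2 * (cmod (u x))\<^sup>2)" using assms unfolding L2_def by auto
  then have "integrable N (\<lambda>x. (cmod (a * u x))\<^sup>2)" by (simp add: norm_mult power_mult_distrib)
  then show ?thesis using m unfolding L2_def by auto
qed

lemma L2_lin: assumes "u \<in> L2 N" "v \<in> L2 N" shows "(\<lambda>y. a * u y + v y) \<in> L2 N"
  using L2_add[OF L2_cmult[OF assms(1)] assms(2)] .

lemma L2_ind: assumes "u \<in> L2 N" "A \<in> sets N" shows "(\<lambda>x. indicator A x * u x) \<in> L2 N"
proof -
  have m: "(\<lambda>x. indicator A x * u x) \<in> borel_measurable N" using assms unfolding L2_def by auto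
  have "integrable N (\<lambda>x. (cmod (u x))\<^sup>2)" using assms unfolding L2_def by auto
  then have "integrable N (\<lambda>x. (cmod (indicator A x * u x))\<^sup>2)"
    by (rule Bochner_Integration.integrable_bound) (use m in \<open>auto intro!: AE_I2 simp: indicator_def\<close>)
  then show ?thesis using m unfolding L2_def by auto
qed

lemma L2_cong: assumes "u \<in> L2 N" "v \<in> borel_measurable N" "AE x in N. u x = v x" shows "v \<in> L2 N"
proof -
  have "integrable N (\<lambda>x. (cmod (u x))\<^sup>2)" using assms unfolding L2_def by auto
  moreover have "AE x in N. (cmod (u x))\<^sup>2 = (cmod (v x))\<^sup>2" using assms(3) by auto
  moreover have "(\<lambda>x. (cmod (v x))\<^sup>2) \<in> borel_measurable N" using assms(2) by measurable
  ultimately have "integrable N (\<lambda>x. (cmod (v x))\<^sup>2)" using integrable_cong_AE_imp by blast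
  then show ?thesis using assms unfolding L2_def by auto
qed

lemma L2_zero: "(\<lambda>x. 0) \<in> L2 N" unfolding L2_def by simp

lemma L2_const: assumes "finite_measure N" shows "(\<lambda>x. a) \<in> L2 N"
  unfolding L2_def using finite_measure.integrable_const[OF assms] by simp

lemma L2_prod: assumes "u \<in> L2 N" "v \<in> L2 N" shows "integrable N (\<lambda>x. u x * cnj (v x))"
proof -
  have [measurable]: "u \<in> borel_measurable N" "v \<in> borel_measurable N" using assms unfolding L2_def by auto
  have m: "(\<lambda>x. u x * cnj (v x)) \<in> borel_measurable N" by measurable
  have "integrable N (\<lambda>x. (cmod (u x))\<^sup>2 + (cmod (v x))\<^sup>2)" using assms unfolding L2_def by auto
  then show ?thesis
  proof (rule Bochner_Integration.integrable_bound)
    show "AE x in N. norm (u x * cnj (v x)) \<le> norm ((cmod (u x))\<^sup>2 + (cmod (v x))\<^sup>2)"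
    proof (intro AE_I2)
      fix x
      have "2 * (cmod (u x) * cmod (v x)) \<le> (cmod (u x))\<^sup>2 + (cmod (v x))\<^sup>2"
        by (rule real_prod_bound)
      moreover have "0 \<le> cmod (u x) * cmod (v x)" by simp
      moreover have "norm ((cmod (u x))\<^sup>2 + (cmod (v x))\<^sup>2) = (cmod (u x))\<^sup>2 + (cmod (v x))\<^sup>2" by simp
      moreover have "norm (u x * cnj (v x)) = cmod (u x) * cmod (v x)" by (simp add: norm_mult)
      ultimately show "norm (u x * cnj (v x)) \<le> norm ((cmod (u x))\<^sup>2 + (cmod (v x))\<^sup>2)" by linarith
    qed
  qed (use m in auto)
qed


locale ps = kg G for G :: "('a, 'k::finite) kgraph" +
  fixes \<mu> :: "('a, 'k) path measure" and f :: "'a \<Rightarrow> ('a, 'k) path \<Rightarrow> complex"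
  assumes PS: "proj_system G \<mu> f"
begin

lemma sp: "space \<mu> = \<Omega>" and st: "sets \<mu> = path_sets G"
  using PS unfolding proj_system_def by auto

lemma st': "sets \<mu> = sigma_sets \<Omega> (cyl G ` M)" using st unfolding path_sets_def .

lemma cyl_sets[measurable]: "cyl G l \<in> sets \<mu>"
proof (cases "l \<in> M")
  case True then show ?thesis unfolding st' by auto
next
  case False then show ?thesis using cyl_nonmor by simp
qed

lemma Om_sets[measurable]: "\<Omega> \<in> sets \<mu>" using sets.top[of \<mu>] sp by simp

lemma UN_cyl_sets: "S \<subseteq> M \<Longrightarrow> \<Union> (cyl G ` S) \<in> sets \<mu>"
proof -
  assume S: "S \<subseteq> M"
  have "countable M" using KG unfolding kgraph_def by blast
  then have "countable S" using S countable_subset by blast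
  then show ?thesis by (intro sets.countable_UN') auto
qed

lemma gen_sub: "cyl G ` M \<subseteq> Pow \<Omega>" using cyl_sub by auto

lemma shift_meas[measurable]: "shift m \<in> measurable \<mu> \<mu>"
proof (rule measurable_sigma_sets[OF st' gen_sub])
  show "shift m \<in> space \<mu> \<rightarrow> \<Omega>" using shift_path sp by auto
  fix y assume "y \<in> cyl G ` M"
  then obtain l where "y = cyl G l" by blast
  then show "shift m -` y \<inter> space \<mu> \<in> sets \<mu>" using shift_pre[of m l] sp UN_cyl_sets by auto
qed

definition R :: "'a \<Rightarrow> ('a, 'k) path measure" where "R l = restrict_space \<mu> (cyl G (s l))"

lemma R_space: "space (R l) = cyl G (s l)" unfolding R_def using cyl_sub sp by (auto simp: space_restrict_space)

lemma cyl_int: "cyl G l \<inter> space \<mu> \<in> sets \<mu>" using cyl_sub sp by (simp add: Int_absorb2)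

lemma prefix_meas: assumes l: "l \<in> M" shows "prefix G l \<in> measurable (R l) \<mu>"
proof (rule measurable_sigma_sets[OF st' gen_sub])
  show "prefix G l \<in> space (R l) \<rightarrow> \<Omega>" using prefix_cyl[OF l] cyl_sub R_space by auto
  fix y assume "y \<in> cyl G ` M"
  then obtain m where y: "y = cyl G m" by blast
  have "prefix G l -` y \<inter> space (R l) = {x \<in> cyl G (s l). prefix G l x \<in> cyl G m}"
    using R_space y by auto
  also have "\<dots> = cyl G (s l) \<inter> \<Union> (cyl G ` {v \<in> M. d v = d m \<and> seg (c l v) 0 (d m) = m})"
    by (rule prefix_pre[OF l])
  finally show "prefix G l -` y \<inter> space (R l) \<in> sets (R l)"
    unfolding R_def using sets_restrict_space_iff[OF cyl_int] UN_cyl_sets[of "{v \<in> M. d v = d m \<and> seg (c l v) 0 (d m) = m}"]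
    by auto
qed

lemma f_meas[measurable]: "l \<in> M \<Longrightarrow> f l \<in> borel_measurable \<mu>"
  using PS unfolding proj_system_def by auto

lemma f_L2: "l \<in> M \<Longrightarrow> f l \<in> L2 \<mu>"
  using PS unfolding proj_system_def L2_def by auto

lemma push: "l \<in> M \<Longrightarrow> A \<in> sets \<mu> \<Longrightarrow>
   emeasure \<mu> {x \<in> cyl G (s l). prefix G l x \<in> A} = (\<integral>\<^sup>+x. ennreal ((cmod (f l x))\<^sup>2) * indicator A x \<partial>\<mu>)"
  using PS unfolding proj_system_def by auto

lemma f_nonzero: "l \<in> M \<Longrightarrow> AE x in \<mu>. x \<in> cyl G l \<longrightarrow> f l x \<noteq> 0"
  using PS unfolding proj_system_def by auto

lemma distr_eq: assumes l: "l \<in> M"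
  shows "distr (R l) \<mu> (prefix G l) = density \<mu> (\<lambda>x. ennreal ((cmod (f l x))\<^sup>2))"
proof (rule measure_eqI)
  show "sets (distr (R l) \<mu> (prefix G l)) = sets (density \<mu> (\<lambda>x. ennreal ((cmod (f l x))\<^sup>2)))" by simp
  fix A assume "A \<in> sets (distr (R l) \<mu> (prefix G l))"
  then have A: "A \<in> sets \<mu>" by simp
  have "emeasure (distr (R l) \<mu> (prefix G l)) A = emeasure (R l) (prefix G l -` A \<inter> space (R l))"
    by (rule emeasure_distr[OF prefix_meas[OF l] A])
  also have "prefix G l -` A \<inter> space (R l) = {x \<in> cyl G (s l). prefix G l x \<in> A}" using R_space by auto
  also have "emeasure (R l) \<dots> = emeasure \<mu> {x \<in> cyl G (s l). prefix G l x \<in> A}"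
    unfolding R_def by (rule emeasure_restrict_space[OF cyl_int]) auto
  also have "\<dots> = emeasure (density \<mu> (\<lambda>x. ennreal ((cmod (f l x))\<^sup>2))) A"
    using push[OF l A] emeasure_density[of "\<lambda>x. ennreal ((cmod (f l x))\<^sup>2)" \<mu> A] A l by simp
  finally show "emeasure (distr (R l) \<mu> (prefix G l)) A = emeasure (density \<mu> (\<lambda>x. ennreal ((cmod (f l x))\<^sup>2))) A" .
qed

lemma cov: assumes l: "l \<in> M" and \<phi>[measurable]: "\<phi> \<in> borel_measurable \<mu>"
  shows "(\<integral>\<^sup>+x. \<phi> (prefix G l x) * indicator (cyl G (s l)) x \<partial>\<mu>) = (\<integral>\<^sup>+x. ennreal ((cmod (f l x))\<^sup>2) * \<phi> x \<partial>\<mu>)"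
proof -
  have "(\<integral>\<^sup>+x. \<phi> x \<partial>distr (R l) \<mu> (prefix G l)) = (\<integral>\<^sup>+x. \<phi> (prefix G l x) \<partial>R l)"
    by (rule nn_integral_distr[OF prefix_meas[OF l]]) simp
  also have "\<dots> = (\<integral>\<^sup>+x. \<phi> (prefix G l x) * indicator (cyl G (s l)) x \<partial>\<mu>)"
    unfolding R_def by (rule nn_integral_restrict_space[OF cyl_int])
  finally have 1: "(\<integral>\<^sup>+x. \<phi> x \<partial>distr (R l) \<mu> (prefix G l)) = (\<integral>\<^sup>+x. \<phi> (prefix G l x) * indicator (cyl G (s l)) x \<partial>\<mu>)" .
  have "(\<integral>\<^sup>+x. \<phi> x \<partial>distr (R l) \<mu> (prefix G l)) = (\<integral>\<^sup>+x. ennreal ((cmod (f l x))\<^sup>2) * \<phi> x \<partial>\<mu>)"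
    unfolding distr_eq[OF l] using l by (intro nn_integral_density) auto
  then show ?thesis using 1 by simp
qed

lemma f_vanish: assumes l: "l \<in> M" shows "AE x in \<mu>. x \<notin> cyl G l \<longrightarrow> f l x = 0"
proof -
  let ?A = "\<Omega> - cyl G l"
  have [measurable]: "f l \<in> borel_measurable \<mu>" using f_meas[OF l] .
  have A: "?A \<in> sets \<mu>" using Om_sets by auto
  have E: "{x \<in> cyl G (s l). prefix G l x \<in> ?A} = {}" using prefix_cyl[OF l] by auto
  have "(\<integral>\<^sup>+x. ennreal ((cmod (f l x))\<^sup>2) * indicator ?A x \<partial>\<mu>) = emeasure \<mu> {x \<in> cyl G (s l). prefix G l x \<in> ?A}"
    using push[OF l A] by (rule sym)
  also have "\<dots> = 0" unfolding E by simp
  finally have "(\<integral>\<^sup>+x. ennreal ((cmod (f l x))\<^sup>2) * indicator ?A x \<partial>\<mu>) = 0" .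
  then have "AE x in \<mu>. ennreal ((cmod (f l x))\<^sup>2) * indicator ?A x = 0"
    using l by (subst (asm) nn_integral_0_iff_AE) auto
  then show ?thesis
    apply (rule AE_mp) apply (rule AE_I2) using sp by (auto simp: indicator_def)
qed

lemma vertex_cyl_meas: assumes v: "v \<in> M" "d v = 0" shows "emeasure \<mu> (cyl G v) < \<infinity>"
proof -
  have sv: "s v = v" using vertex[OF v] by simp
  have "{x \<in> cyl G (s v). prefix G v x \<in> \<Omega>} = cyl G v" using prefix_cyl[OF v(1)] cyl_sub sv by auto
  then have "emeasure \<mu> (cyl G v) = (\<integral>\<^sup>+x. ennreal ((cmod (f v x))\<^sup>2) * indicator \<Omega> x \<partial>\<mu>)"
    using push[OF v(1) Om_sets] by simp
  also have "\<dots> = (\<integral>\<^sup>+x. ennreal ((cmod (f v x))\<^sup>2) \<partial>\<mu>)"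
    by (rule nn_integral_cong) (simp add: sp)
  also have "\<dots> = ennreal (\<integral>x. (cmod (f v x))\<^sup>2 \<partial>\<mu>)"
    using f_L2[OF v(1)] unfolding L2_def by (intro nn_integral_eq_integral) auto
  finally show ?thesis by simp
qed


lemma finite_mu: assumes fk: "finite_kgraph G" shows "finite_measure \<mu>"
proof
  let ?V = "{l \<in> M. d l = 0}"
  have fin: "finite ?V" using fk unfolding finite_kgraph_def by blast
  have sub: "space \<mu> \<subseteq> (\<Union>v\<in>?V. cyl G v)"
  proof
    fix x assume "x \<in> space \<mu>"
    then have x: "x \<in> \<Omega>" using sp by simp
    have "x 0 0 \<in> ?V" using path_mor[OF x, of 0 0] by simp
    then show "x \<in> (\<Union>v\<in>?V. cyl G v)" using in_cyl[OF x, of 0] by blast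
  qed
  have "emeasure \<mu> (space \<mu>) \<le> emeasure \<mu> (\<Union>v\<in>?V. cyl G v)"
    by (rule emeasure_mono[OF sub]) (use fin in auto)
  also have "\<dots> \<le> (\<Sum>v\<in>?V. emeasure \<mu> (cyl G v))"
    by (rule emeasure_subadditive_finite[OF fin]) auto
  also have "\<dots> < \<infinity>" using fin vertex_cyl_meas by (simp add: ennreal_sum_less_top)
  finally show "emeasure \<mu> (space \<mu>) \<noteq> \<infinity>" by simp
qed

lemma range_lemma: assumes l: "l \<in> M" and g: "g \<in> L2 \<mu>" and supp: "AE x in \<mu>. x \<notin> cyl G l \<longrightarrow> g x = 0"
  shows "\<exists>g'\<in>L2 \<mu>. rep_op G f l g' \<in> L2 \<mu> \<and> (AE x in \<mu>. rep_op G f l g' x = g x)"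
proof -
  define q where "q = (\<lambda>y. g y / f l y)"
  define g' where "g' = (\<lambda>x. if x \<in> cyl G (s l) then q (prefix G l x) else 0)"
  have [measurable]: "g \<in> borel_measurable \<mu>" using g unfolding L2_def by auto
  have [measurable]: "f l \<in> borel_measurable \<mu>" using f_meas[OF l] .
  have qm[measurable]: "q \<in> borel_measurable \<mu>" unfolding q_def by measurable
  have "(\<lambda>x. q (prefix G l x)) \<in> borel_measurable (R l)"
    by (rule measurable_compose[OF prefix_meas[OF l] qm])
  then have gm[measurable]: "g' \<in> borel_measurable \<mu>" unfolding R_def g'_def
    using measurable_restrict_space_iff[OF cyl_int[of "s l"], of 0 borel "\<lambda>x. q (prefix G l x)"] by simp
  have gint: "integrable \<mu> (\<lambda>x. (cmod (g x))\<^sup>2)" using g unfolding L2_def by auto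
  have "(\<integral>\<^sup>+x. ennreal (norm ((cmod (g' x))\<^sup>2)) \<partial>\<mu>) =
        (\<integral>\<^sup>+x. ennreal ((cmod (q (prefix G l x)))\<^sup>2) * indicator (cyl G (s l)) x \<partial>\<mu>)"
    by (rule nn_integral_cong) (simp add: g'_def indicator_def)
  also have "\<dots> = (\<integral>\<^sup>+x. ennreal ((cmod (f l x))\<^sup>2) * ennreal ((cmod (q x))\<^sup>2) \<partial>\<mu>)"
    by (rule cov[OF l]) measurable
  also have "\<dots> \<le> (\<integral>\<^sup>+x. ennreal ((cmod (g x))\<^sup>2) \<partial>\<mu>)"
  proof (rule nn_integral_mono)
    fix x
    have "(cmod (f l x))\<^sup>2 * (cmod (q x))\<^sup>2 \<le> (cmod (g x))\<^sup>2"
      by (cases "f l x = 0") (simp_all add: q_def norm_divide power_divide)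
    then show "ennreal ((cmod (f l x))\<^sup>2) * ennreal ((cmod (q x))\<^sup>2) \<le> ennreal ((cmod (g x))\<^sup>2)"
      by (simp add: ennreal_mult[symmetric])
  qed
  also have "\<dots> = ennreal (\<integral>x. (cmod (g x))\<^sup>2 \<partial>\<mu>)"
    using gint by (intro nn_integral_eq_integral) auto
  finally have "(\<integral>\<^sup>+x. ennreal (norm ((cmod (g' x))\<^sup>2)) \<partial>\<mu>) < \<infinity>" by (simp add: le_less_trans)
  then have "integrable \<mu> (\<lambda>x. (cmod (g' x))\<^sup>2)" by (intro integrableI_bounded) auto
  then have g'L: "g' \<in> L2 \<mu>" unfolding L2_def by simp
  have rm: "rep_op G f l g' \<in> borel_measurable \<mu>" unfolding rep_op_def by measurable
  have ae: "AE x in \<mu>. g x = rep_op G f l g' x"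
    using f_nonzero[OF l] f_vanish[OF l] supp
  proof eventually_elim
    case (elim x)
    show ?case
    proof (cases "x \<in> cyl G l")
      case True
      have "shift (d l) x \<in> cyl G (s l)" using shift_cyl[OF True] .
      then have "g' (shift (d l) x) = q x" unfolding g'_def using prefix_shift[OF True] by simp
      then show ?thesis using True elim unfolding rep_op_def q_def by simp
    next
      case False then show ?thesis using elim unfolding rep_op_def by simp
    qed
  qed
  have "rep_op G f l g' \<in> L2 \<mu>" by (rule L2_cong[OF g rm ae])
  moreover have "AE x in \<mu>. rep_op G f l g' x = g x" using ae by (rule AE_mp) (rule AE_I2, auto)
  ultimately show ?thesis using g'L by blast
qed

end



lemma vanish_real:
  fixes N :: "'b measure" and F :: "'b \<Rightarrow> real"
  assumes fin: "finite_measure N" and sN: "sets N = sigma_sets \<Omega> E" and spN: "space N = \<Omega>"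
    and IS: "Int_stable E" and EP: "E \<subseteq> Pow \<Omega>" and OE: "\<Omega> \<in> E"
    and Fi: "integrable N F" and Z: "\<And>A. A \<in> E \<Longrightarrow> (\<integral>x. indicator A x * F x \<partial>N) = 0"
  shows "AE x in N. F x = 0"
proof -
  interpret finite_measure N by (rule fin)
  define P where "P = (\<lambda>x. max (F x) 0)"
  define Q where "Q = (\<lambda>x. max (- F x) 0)"
  have Pi: "integrable N P" unfolding P_def using Fi by auto
  have Qi: "integrable N Q" unfolding Q_def using Fi by auto
  have [measurable]: "P \<in> borel_measurable N" "Q \<in> borel_measurable N" using Pi Qi by auto
  have Esets: "E \<subseteq> sets N" using sN by auto
  have FPQ: "\<And>x. F x = P x - Q x" unfolding P_def Q_def by auto
  have eqA: "(\<integral>x. P x * indicator A x \<partial>N) = (\<integral>x. Q x * indicator A x \<partial>N)" if A: "A \<in> E" for A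
  proof -
    have As: "A \<in> sets N" using A Esets by auto
    have i1: "integrable N (\<lambda>x. P x * indicator A x)" "integrable N (\<lambda>x. Q x * indicator A x)"
      using integrable_real_mult_indicator[OF As Pi] integrable_real_mult_indicator[OF As Qi] by auto
    have "(\<integral>x. indicator A x * F x \<partial>N) = (\<integral>x. P x * indicator A x - Q x * indicator A x \<partial>N)"
      by (rule Bochner_Integration.integral_cong) (auto simp: FPQ algebra_simps)
    also have "\<dots> = (\<integral>x. P x * indicator A x \<partial>N) - (\<integral>x. Q x * indicator A x \<partial>N)"
      by (rule Bochner_Integration.integral_diff[OF i1])
    finally show ?thesis using Z[OF A] by simp
  qed
  have em: "emeasure (density N (\<lambda>x. ennreal (P x))) A = ennreal (\<integral>x. P x * indicator A x \<partial>N)"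
     "emeasure (density N (\<lambda>x. ennreal (Q x))) A = ennreal (\<integral>x. Q x * indicator A x \<partial>N)"
    if As: "A \<in> sets N" for A
  proof -
    have "emeasure (density N (\<lambda>x. ennreal (P x))) A = (\<integral>\<^sup>+x. ennreal (P x) * indicator A x \<partial>N)"
      by (rule emeasure_density) (auto simp: As)
    also have "\<dots> = (\<integral>\<^sup>+x. ennreal (P x * indicator A x) \<partial>N)"
      by (rule nn_integral_cong) (auto simp: indicator_def)
    also have "\<dots> = ennreal (\<integral>x. P x * indicator A x \<partial>N)"
      by (rule nn_integral_eq_integral[OF integrable_real_mult_indicator[OF As Pi]]) (auto simp: P_def)
    finally show "emeasure (density N (\<lambda>x. ennreal (P x))) A = ennreal (\<integral>x. P x * indicator A x \<partial>N)" .
    have "emeasure (density N (\<lambda>x. ennreal (Q x))) A = (\<integral>\<^sup>+x. ennreal (Q x) * indicator A x \<partial>N)"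
      by (rule emeasure_density) (auto simp: As)
    also have "\<dots> = (\<integral>\<^sup>+x. ennreal (Q x * indicator A x) \<partial>N)"
      by (rule nn_integral_cong) (auto simp: indicator_def)
    also have "\<dots> = ennreal (\<integral>x. Q x * indicator A x \<partial>N)"
      by (rule nn_integral_eq_integral[OF integrable_real_mult_indicator[OF As Qi]]) (auto simp: Q_def)
    finally show "emeasure (density N (\<lambda>x. ennreal (Q x))) A = ennreal (\<integral>x. Q x * indicator A x \<partial>N)" .
  qed
  have "density N (\<lambda>x. ennreal (P x)) = density N (\<lambda>x. ennreal (Q x))"
  proof (rule measure_eqI_generator_eq[OF IS EP, where A="\<lambda>_. \<Omega>"])
    fix X assume "X \<in> E"
    then show "emeasure (density N (\<lambda>x. ennreal (P x))) X = emeasure (density N (\<lambda>x. ennreal (Q x))) X"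
      using em eqA Esets by auto
  next
    show "sets (density N (\<lambda>x. ennreal (P x))) = sigma_sets \<Omega> E" using sN by simp
    show "sets (density N (\<lambda>x. ennreal (Q x))) = sigma_sets \<Omega> E" using sN by simp
    show "range (\<lambda>_. \<Omega>) \<subseteq> E" using OE by auto
    show "(\<Union>i. \<Omega>) = \<Omega>" by simp
    fix i :: nat
    show "emeasure (density N (\<lambda>x. ennreal (P x))) \<Omega> \<noteq> \<infinity>" using em(1)[of \<Omega>] OE Esets by auto
  qed
  then have "AE x in N. ennreal (P x) = ennreal (Q x)"
    by (intro density_unique) auto
  then show ?thesis
    by (rule AE_mp) (rule AE_I2, auto simp: P_def Q_def max_def split: if_splits)
qed

lemma vanish_cplx:
  fixes N :: "'b measure" and F :: "'b \<Rightarrow> complex"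
  assumes fin: "finite_measure N" and sN: "sets N = sigma_sets \<Omega> E" and spN: "space N = \<Omega>"
    and IS: "Int_stable E" and EP: "E \<subseteq> Pow \<Omega>" and OE: "\<Omega> \<in> E"
    and Fi: "integrable N F" and Z: "\<And>A. A \<in> E \<Longrightarrow> (\<integral>x. indicator A x * F x \<partial>N) = 0"
  shows "AE x in N. F x = 0"
proof -
  have Esets: "E \<subseteq> sets N" using sN by auto
  have iA: "integrable N (\<lambda>x. indicator A x * F x)" if "A \<in> E" for A
  proof -
    have "(\<lambda>x. indicator A x *\<^sub>R F x) = (\<lambda>x. indicator A x * F x)" by (auto simp: fun_eq_iff indicator_def)
    then show ?thesis using integrable_mult_indicator[of A N F] that Esets Fi by auto
  qed
  have "AE x in N. Re (F x) = 0"
  proof (rule vanish_real[OF fin sN spN IS EP OE])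
    show "integrable N (\<lambda>x. Re (F x))" using Fi by auto
    fix A assume A: "A \<in> E"
    have "(\<integral>x. indicator A x * Re (F x) \<partial>N) = (\<integral>x. Re (indicator A x * F x) \<partial>N)"
      by (rule Bochner_Integration.integral_cong) (auto simp: indicator_def)
    also have "\<dots> = Re (\<integral>x. indicator A x * F x \<partial>N)" using integral_Re[OF iA[OF A]] .
    finally show "(\<integral>x. indicator A x * Re (F x) \<partial>N) = 0" using Z[OF A] by simp
  qed
  moreover have "AE x in N. Im (F x) = 0"
  proof (rule vanish_real[OF fin sN spN IS EP OE])
    show "integrable N (\<lambda>x. Im (F x))" using Fi by auto
    fix A assume A: "A \<in> E"
    have "(\<integral>x. indicator A x * Im (F x) \<partial>N) = (\<integral>x. Im (indicator A x * F x) \<partial>N)"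
      by (rule Bochner_Integration.integral_cong) (auto simp: indicator_def)
    also have "\<dots> = Im (\<integral>x. indicator A x * F x \<partial>N)" using integral_Im[OF iA[OF A]] .
    finally show "(\<integral>x. indicator A x * Im (F x) \<partial>N) = 0" using Z[OF A] by simp
  qed
  ultimately show ?thesis by eventually_elim (simp add: complex_eq_iff)
qed

lemma norm_expand: "(cmod (c * b + a))\<^sup>2 = (cmod a)\<^sup>2 + (cmod c)\<^sup>2 * (cmod b)\<^sup>2 + 2 * Re (cnj c * (a * cnj b))"
  unfolding cmod_power2 by (simp add: power2_eq_square algebra_simps)

lemma int_expand:
  fixes N :: "'b measure"
  assumes a: "a \<in> L2 N" and b: "b \<in> L2 N"
  shows "(\<integral>x. (cmod (c * b x + a x))\<^sup>2 \<partial>N) =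
     (\<integral>x. (cmod (a x))\<^sup>2 \<partial>N) + (cmod c)\<^sup>2 * (\<integral>x. (cmod (b x))\<^sup>2 \<partial>N) + 2 * Re (cnj c * (\<integral>x. a x * cnj (b x) \<partial>N))"
proof -
  have ia: "integrable N (\<lambda>x. (cmod (a x))\<^sup>2)" and ib: "integrable N (\<lambda>x. (cmod (b x))\<^sup>2)"
    using a b unfolding L2_def by auto
  have iab: "integrable N (\<lambda>x. a x * cnj (b x))" using L2_prod[OF a b] .
  have iab2: "integrable N (\<lambda>x. cnj c * (a x * cnj (b x)))" using iab by auto
  have "(\<integral>x. (cmod (c * b x + a x))\<^sup>2 \<partial>N) =
     (\<integral>x. (cmod (a x))\<^sup>2 + (cmod c)\<^sup>2 * (cmod (b x))\<^sup>2 + 2 * Re (cnj c * (a x * cnj (b x))) \<partial>N)"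
    by (simp only: norm_expand)
  also have "\<dots> = (\<integral>x. (cmod (a x))\<^sup>2 + (cmod c)\<^sup>2 * (cmod (b x))\<^sup>2 \<partial>N) + (\<integral>x. 2 * Re (cnj c * (a x * cnj (b x))) \<partial>N)"
    apply (rule Bochner_Integration.integral_add)
    using ia ib apply auto[1]
    apply (rule integrable_mult_right) apply (rule integrable_Re) apply (rule iab2)
    done
  also have "(\<integral>x. (cmod (a x))\<^sup>2 + (cmod c)\<^sup>2 * (cmod (b x))\<^sup>2 \<partial>N) = (\<integral>x. (cmod (a x))\<^sup>2 \<partial>N) + (\<integral>x. (cmod c)\<^sup>2 * (cmod (b x))\<^sup>2 \<partial>N)"
    by (rule Bochner_Integration.integral_add) (use ia ib in auto)
  also have "(\<integral>x. 2 * Re (cnj c * (a x * cnj (b x))) \<partial>N) = 2 * (\<integral>x. Re (cnj c * (a x * cnj (b x))) \<partial>N)"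
    by (rule integral_mult_right_zero)
  also have "(\<integral>x. Re (cnj c * (a x * cnj (b x))) \<partial>N) = Re (\<integral>x. cnj c * (a x * cnj (b x)) \<partial>N)"
    using integral_Re[OF iab2] .
  finally show ?thesis by simp
qed


locale two = kg G for G :: "('a, 'k::finite) kgraph" +
  fixes \<mu>S \<mu>T :: "('a, 'k) path measure" and fS fT :: "'a \<Rightarrow> ('a, 'k) path \<Rightarrow> complex"
  assumes PSS: "proj_system G \<mu>S fS" and PST: "proj_system G \<mu>T fT" and FK: "finite_kgraph G"
begin

sublocale S: ps G \<mu>S fS by unfold_locales (rule PSS)
sublocale T: ps G \<mu>T fT by unfold_locales (rule PST)

lemma spS: "space \<mu>S = \<Omega>" and spT: "space \<mu>T = \<Omega>" and stST: "sets \<mu>S = sets \<mu>T"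
  using S.sp T.sp S.st T.st by auto

lemma measST: "g \<in> borel_measurable \<mu>S \<longleftrightarrow> g \<in> borel_measurable \<mu>T"
proof -
  have "borel_measurable \<mu>S = borel_measurable \<mu>T" by (rule measurable_cong_sets[OF stST refl])
  then show ?thesis by (rule arg_cong)
qed

lemma finS: "finite_measure \<mu>S" using S.finite_mu[OF FK] .
lemma finT: "finite_measure \<mu>T" using T.finite_mu[OF FK] .

lemma reverse_dir:
  assumes NS: "null_sets \<mu>S = null_sets \<mu>T" and hm[measurable]: "h \<in> borel_measurable \<mu>T"
    and dens: "\<mu>S = density \<mu>T (\<lambda>x. ennreal ((cmod (h x))\<^sup>2))"
    and rel: "\<forall>l\<in>M. AE x in \<mu>T. fS l x = h (shift (d l) x) / h x * fT l x"
  shows "unitarily_equiv G \<mu>S fS \<mu>T fT"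
proof -
  define F where "F = (\<lambda>x. (cmod (h x))\<^sup>2)"
  have Fm[measurable]: "F \<in> borel_measurable \<mu>T" unfolding F_def by measurable
  have dens': "\<mu>S = density \<mu>T (\<lambda>x. ennreal (F x))" using dens unfolding F_def .
  have transfer: "AE x in \<mu>T. P x" if "AE x in \<mu>S. P x" for P
    using that unfolding eventually_ae_filter using NS spS spT by auto
  have hnz: "AE x in \<mu>T. h x \<noteq> 0"
  proof -
    let ?Z = "{x \<in> space \<mu>T. h x = 0}"
    have Zs: "?Z \<in> sets \<mu>T" by measurable
    have "emeasure \<mu>S ?Z = (\<integral>\<^sup>+x. ennreal (F x) * indicator ?Z x \<partial>\<mu>T)"
      unfolding dens' by (rule emeasure_density[OF _ Zs]) measurable
    also have "\<dots> = (\<integral>\<^sup>+x. 0 \<partial>\<mu>T)" by (rule nn_integral_cong) (auto simp: F_def indicator_def)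
    finally have "?Z \<in> null_sets \<mu>S" using Zs stST by auto
    then have "?Z \<in> null_sets \<mu>T" using NS by simp
    then show ?thesis by (rule AE_I') auto
  qed
  have iso: "(\<integral>x. (cmod (h x * g x))\<^sup>2 \<partial>\<mu>T) = (\<integral>x. (cmod (g x))\<^sup>2 \<partial>\<mu>S)"
    and intT: "integrable \<mu>T (\<lambda>x. (cmod (h x * g x))\<^sup>2)" if g: "g \<in> L2 \<mu>S" for g
  proof -
    have gmT[measurable]: "g \<in> borel_measurable \<mu>T" using g measST unfolding L2_def by auto
    have eq: "(\<lambda>x. F x *\<^sub>R (cmod (g x))\<^sup>2) = (\<lambda>x. (cmod (h x * g x))\<^sup>2)"
      by (auto simp: F_def norm_mult power_mult_distrib fun_eq_iff)
    have "(\<integral>x. (cmod (g x))\<^sup>2 \<partial>\<mu>S) = (\<integral>x. F x *\<^sub>R (cmod (g x))\<^sup>2 \<partial>\<mu>T)"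
      unfolding dens' by (rule integral_density) (auto simp: F_def)
    then show "(\<integral>x. (cmod (h x * g x))\<^sup>2 \<partial>\<mu>T) = (\<integral>x. (cmod (g x))\<^sup>2 \<partial>\<mu>S)" using eq by simp
    have "integrable \<mu>S (\<lambda>x. (cmod (g x))\<^sup>2)" using g unfolding L2_def by auto
    then have "integrable \<mu>T (\<lambda>x. F x *\<^sub>R (cmod (g x))\<^sup>2)"
      unfolding dens' by (subst (asm) integrable_density) (auto simp: F_def)
    then show "integrable \<mu>T (\<lambda>x. (cmod (h x * g x))\<^sup>2)" using eq by simp
  qed
  show ?thesis unfolding unitarily_equiv_def
  proof (intro exI[of _ "\<lambda>g x. h x * g x"] conjI ballI allI impI)
    fix g assume g: "g \<in> L2 \<mu>S"
    have gmT[measurable]: "g \<in> borel_measurable \<mu>T" using g measST unfolding L2_def by auto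
    show "(\<lambda>x. h x * g x) \<in> L2 \<mu>T" unfolding L2_def using intT[OF g] by auto
    show "(\<integral>x. (cmod (h x * g x))\<^sup>2 \<partial>\<mu>T) = (\<integral>x. (cmod (g x))\<^sup>2 \<partial>\<mu>S)" using iso[OF g] .
  next
    fix g g' assume "g \<in> L2 \<mu>S" "g' \<in> L2 \<mu>S" "AE x in \<mu>S. g x = g' x"
    then have "AE x in \<mu>T. g x = g' x" using transfer by blast
    then show "AE x in \<mu>T. h x * g x = h x * g' x" by (rule AE_mp) (rule AE_I2, auto)
  next
    fix g g' c
    show "AE x in \<mu>T. h x * (c * g x + g' x) = c * (h x * g x) + h x * g' x"
      by (rule AE_I2) (simp add: algebra_simps)
  next
    fix g assume g: "g \<in> L2 \<mu>T"
    have [measurable]: "g \<in> borel_measurable \<mu>T" using g unfolding L2_def by auto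
    define g' where "g' = (\<lambda>x. g x / h x)"
    have g'T[measurable]: "g' \<in> borel_measurable \<mu>T" unfolding g'_def by measurable
    have gi: "integrable \<mu>T (\<lambda>x. (cmod (g x))\<^sup>2)" using g unfolding L2_def by auto
    have "integrable \<mu>T (\<lambda>x. F x *\<^sub>R (cmod (g' x))\<^sup>2)"
    proof (rule Bochner_Integration.integrable_bound[OF gi])
      show "(\<lambda>x. F x *\<^sub>R (cmod (g' x))\<^sup>2) \<in> borel_measurable \<mu>T" by measurable
      show "AE x in \<mu>T. norm (F x *\<^sub>R (cmod (g' x))\<^sup>2) \<le> norm ((cmod (g x))\<^sup>2)"
        apply (rule AE_I2)
        subgoal for x by (cases "h x = 0") (auto simp: F_def g'_def norm_divide power_divide)
        done
    qed
    then have "integrable \<mu>S (\<lambda>x. (cmod (g' x))\<^sup>2)"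
      unfolding dens' by (subst integrable_density) (auto simp: F_def)
    moreover have "g' \<in> borel_measurable \<mu>S" using g'T measST[of g'] by blast
    ultimately have "g' \<in> L2 \<mu>S" unfolding L2_def by simp
    moreover have "AE x in \<mu>T. h x * g' x = g x" using hnz by (rule AE_mp) (rule AE_I2, auto simp: g'_def)
    ultimately show "\<exists>g'\<in>L2 \<mu>S. AE x in \<mu>T. h x * g' x = g x" by blast
  next
    fix l g assume l: "l \<in> M" and g: "g \<in> L2 \<mu>S"
    have "AE x in \<mu>T. fS l x = h (shift (d l) x) / h x * fT l x" using rel l by blast
    then show "AE x in \<mu>T. h x * rep_op G fS l g x = rep_op G fT l (\<lambda>x. h x * g x) x"
      using hnz by eventually_elim (auto simp: rep_op_def)
  qed
qed


end

locale fwd = two G \<mu>S \<mu>T fS fT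
  for G :: "('a, 'k::finite) kgraph" and \<mu>S \<mu>T :: "('a, 'k) path measure"
    and fS fT :: "'a \<Rightarrow> ('a, 'k) path \<Rightarrow> complex" +
  fixes U :: "(('a, 'k) path \<Rightarrow> complex) \<Rightarrow> (('a, 'k) path \<Rightarrow> complex)"
  assumes U1: "\<And>g. g \<in> L2 \<mu>S \<Longrightarrow> U g \<in> L2 \<mu>T"
  and U2: "\<And>g g'. g \<in> L2 \<mu>S \<Longrightarrow> g' \<in> L2 \<mu>S \<Longrightarrow> AE x in \<mu>S. g x = g' x \<Longrightarrow> AE x in \<mu>T. U g x = U g' x"
  and U3: "\<And>g g' c. g \<in> L2 \<mu>S \<Longrightarrow> g' \<in> L2 \<mu>S \<Longrightarrow> AE x in \<mu>T. U (\<lambda>y. c * g y + g' y) x = c * U g x + U g' x"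
  and U4: "\<And>g. g \<in> L2 \<mu>S \<Longrightarrow> (\<integral>x. (cmod (U g x))\<^sup>2 \<partial>\<mu>T) = (\<integral>x. (cmod (g x))\<^sup>2 \<partial>\<mu>S)"
  and U5: "\<And>g. g \<in> L2 \<mu>T \<Longrightarrow> \<exists>g'\<in>L2 \<mu>S. AE x in \<mu>T. U g' x = g x"
  and U6: "\<And>l g. l \<in> M \<Longrightarrow> g \<in> L2 \<mu>S \<Longrightarrow> AE x in \<mu>T. U (rep_op G fS l g) x = rep_op G fT l (U g) x"
begin

lemma U0: "AE x in \<mu>T. U (\<lambda>y. 0) x = 0"
proof -
  have "AE x in \<mu>T. U (\<lambda>y. 1 * 0 + 0) x = 1 * U (\<lambda>y. 0) x + U (\<lambda>y. 0) x"
    by (rule U3[OF L2_zero L2_zero])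
  then show ?thesis by (rule AE_mp) (rule AE_I2, simp)
qed

lemma Uadd: assumes "u \<in> L2 \<mu>S" "v \<in> L2 \<mu>S" shows "AE x in \<mu>T. U (\<lambda>y. u y + v y) x = U u x + U v x"
proof -
  have "AE x in \<mu>T. U (\<lambda>y. 1 * u y + v y) x = 1 * U u x + U v x" by (rule U3[OF assms])
  then show ?thesis by simp
qed

lemma supp: assumes m: "m \<in> M" and g: "g \<in> L2 \<mu>S" and s: "AE x in \<mu>S. x \<notin> cyl G m \<longrightarrow> g x = 0"
  shows "AE x in \<mu>T. x \<notin> cyl G m \<longrightarrow> U g x = 0"
proof -
  obtain g' where g': "g' \<in> L2 \<mu>S" "rep_op G fS m g' \<in> L2 \<mu>S" "AE x in \<mu>S. rep_op G fS m g' x = g x"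
    using S.range_lemma[OF m g s] by blast
  have "AE x in \<mu>T. U (rep_op G fS m g') x = U g x" by (rule U2[OF g'(2) g g'(3)])
  moreover have "AE x in \<mu>T. U (rep_op G fS m g') x = rep_op G fT m (U g') x" by (rule U6[OF m g'(1)])
  moreover note T.f_vanish[OF m]
  ultimately show ?thesis by eventually_elim (auto simp: rep_op_def)
qed

lemma Usum: assumes "finite P" shows "(\<forall>m\<in>P. \<phi> m \<in> L2 \<mu>S) \<longrightarrow> (\<lambda>y. \<Sum>m\<in>P. \<phi> m y) \<in> L2 \<mu>S \<and>
     (AE x in \<mu>T. U (\<lambda>y. \<Sum>m\<in>P. \<phi> m y) x = (\<Sum>m\<in>P. U (\<phi> m) x))"
  using assms
proof (induction P rule: finite_induct)
  case empty
  show ?case using L2_zero U0 by simp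
next
  case (insert a F)
  show ?case
  proof
    assume H: "\<forall>m\<in>insert a F. \<phi> m \<in> L2 \<mu>S"
    then have IH: "(\<lambda>y. \<Sum>m\<in>F. \<phi> m y) \<in> L2 \<mu>S" "AE x in \<mu>T. U (\<lambda>y. \<Sum>m\<in>F. \<phi> m y) x = (\<Sum>m\<in>F. U (\<phi> m) x)"
      using insert by auto
    have a: "\<phi> a \<in> L2 \<mu>S" using H by auto
    have eq: "(\<lambda>y. \<Sum>m\<in>insert a F. \<phi> m y) = (\<lambda>y. \<phi> a y + (\<Sum>m\<in>F. \<phi> m y))" using insert by simp
    show "(\<lambda>y. \<Sum>m\<in>insert a F. \<phi> m y) \<in> L2 \<mu>S \<and>
     (AE x in \<mu>T. U (\<lambda>y. \<Sum>m\<in>insert a F. \<phi> m y) x = (\<Sum>m\<in>insert a F. U (\<phi> m) x))"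
    proof
      show "(\<lambda>y. \<Sum>m\<in>insert a F. \<phi> m y) \<in> L2 \<mu>S" unfolding eq using L2_add[OF a IH(1)] .
      have "AE x in \<mu>T. U (\<lambda>y. \<phi> a y + (\<Sum>m\<in>F. \<phi> m y)) x = U (\<phi> a) x + (\<Sum>m\<in>F. U (\<phi> m) x)"
        using Uadd[OF a IH(1)] IH(2) by eventually_elim simp
      then show "AE x in \<mu>T. U (\<lambda>y. \<Sum>m\<in>insert a F. \<phi> m y) x = (\<Sum>m\<in>insert a F. U (\<phi> m) x)"
        unfolding eq using insert(1,2) by simp
    qed
  qed
qed

lemma comm: assumes l: "l \<in> M" and g: "g \<in> L2 \<mu>S"
  shows "AE x in \<mu>T. U (\<lambda>y. indicator (cyl G l) y * g y) x = indicator (cyl G l) x * U g x"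
proof -
  let ?P = "{m \<in> M. d m = d l}"
  define \<phi> where "\<phi> = (\<lambda>m y. indicator (cyl G m) y * g y)"
  have finP: "finite ?P" using FK unfolding finite_kgraph_def by blast
  have \<phi>L: "\<forall>m\<in>?P. \<phi> m \<in> L2 \<mu>S" unfolding \<phi>_def using L2_ind[OF g S.cyl_sets] by blast
  note US = Usum[OF finP, of \<phi>, THEN mp, OF \<phi>L]
  have mem: "x \<in> cyl G m \<longleftrightarrow> m = x 0 (d l)" if x: "x \<in> \<Omega>" and m: "m \<in> ?P" for x m
    using m x unfolding cyl_def by auto
  have x0P: "x 0 (d l) \<in> ?P" if x: "x \<in> \<Omega>" for x
    using path_mor[OF x fun_zero_le, of "d l"] by (simp add: fun_diff0)
  have dec: "AE x in \<mu>S. g x = (\<Sum>m\<in>?P. \<phi> m x)"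
  proof (rule AE_I2)
    fix x assume "x \<in> space \<mu>S"
    then have x: "x \<in> \<Omega>" using spS by simp
    have "(\<Sum>m\<in>?P. \<phi> m x) = (\<Sum>m\<in>?P. if m = x 0 (d l) then g x else 0)"
      by (rule sum.cong) (auto simp: \<phi>_def mem[OF x] indicator_def)
    also have "\<dots> = g x" using finP x0P[OF x] by simp
    finally show "g x = (\<Sum>m\<in>?P. \<phi> m x)" by simp
  qed
  have Ug: "AE x in \<mu>T. U g x = U (\<lambda>y. \<Sum>m\<in>?P. \<phi> m y) x" by (rule U2[OF g US[THEN conjunct1] dec])
  have sup: "AE x in \<mu>T. \<forall>m\<in>?P. x \<notin> cyl G m \<longrightarrow> U (\<phi> m) x = 0"
  proof (rule eventually_ball_finite[OF finP], rule ballI)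
    fix m assume m: "m \<in> ?P"
    show "AE x in \<mu>T. x \<notin> cyl G m \<longrightarrow> U (\<phi> m) x = 0"
      using supp[of m "\<phi> m"] m \<phi>L by (auto simp: \<phi>_def intro!: AE_I2)
  qed
  have lP: "l \<in> ?P" using l by simp
  show ?thesis using Ug US[THEN conjunct2] sup AE_space
  proof eventually_elim
    case (elim x)
    then have x: "x \<in> \<Omega>" using spT by simp
    show ?case
    proof (cases "x \<in> cyl G l")
      case True
      have "(\<Sum>m\<in>?P. U (\<phi> m) x) = U (\<phi> l) x + (\<Sum>m\<in>?P - {l}. U (\<phi> m) x)"
        using sum.remove[OF finP lP] by simp
      also have "(\<Sum>m\<in>?P - {l}. U (\<phi> m) x) = 0"
      proof (rule sum.neutral, rule ballI)
        fix m assume m: "m \<in> ?P - {l}"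
        then have "x \<notin> cyl G m" using mem[OF x, of m] mem[OF x lP] True by auto
        then show "U (\<phi> m) x = 0" using elim m by auto
      qed
      finally show ?thesis using elim True by (simp add: \<phi>_def)
    next
      case False
      then show ?thesis using elim lP by (simp add: \<phi>_def)
    qed
  qed
qed


definition E :: "('a, 'k) path set set" where
  "E = {A. \<exists>F. finite F \<and> F \<subseteq> M \<and> A = \<Omega> \<inter> \<Inter> (cyl G ` F)}"

lemma finINT_sets: "finite F \<Longrightarrow> \<Omega> \<inter> \<Inter> (cyl G ` F) \<in> sets \<mu>S"
proof (induction F rule: finite_induct)
  case empty then show ?case using S.Om_sets by simp
next
  case (insert a F)
  have "\<Omega> \<inter> \<Inter> (cyl G ` insert a F) = cyl G a \<inter> (\<Omega> \<inter> \<Inter> (cyl G ` F))" by auto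
  then show ?case using insert S.cyl_sets by auto
qed

lemma E_sets: "A \<in> E \<Longrightarrow> A \<in> sets \<mu>S" unfolding E_def using finINT_sets by auto
lemma E_setsT: "A \<in> E \<Longrightarrow> A \<in> sets \<mu>T" using E_sets stST by auto

lemma E_IS: "Int_stable E"
proof (rule Int_stableI)
  fix a b assume a: "a \<in> E" and b: "b \<in> E"
  from a obtain F1 where F1: "finite F1" "F1 \<subseteq> M" "a = \<Omega> \<inter> \<Inter> (cyl G ` F1)" unfolding E_def by auto
  from b obtain F2 where F2: "finite F2" "F2 \<subseteq> M" "b = \<Omega> \<inter> \<Inter> (cyl G ` F2)" unfolding E_def by auto
  have "a \<inter> b = \<Omega> \<inter> \<Inter> (cyl G ` (F1 \<union> F2))" unfolding F1(3) F2(3) image_Un Inter_Un_distrib by blast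
  moreover have "finite (F1 \<union> F2)" "F1 \<union> F2 \<subseteq> M" using F1 F2 by auto
  ultimately show "a \<inter> b \<in> E" unfolding E_def by blast
qed

lemma E_Pow: "E \<subseteq> Pow \<Omega>" unfolding E_def by blast
lemma Om_E: "\<Omega> \<in> E" unfolding E_def by (intro CollectI exI[of _ "{}"]) simp


lemma E_gen: "sets \<mu>S = sigma_sets \<Omega> E"
proof
  have "E \<subseteq> sets \<mu>S" using E_sets by auto
  then have "E \<subseteq> sigma_sets \<Omega> (cyl G ` M)" using S.st' by simp
  then have "sigma_sets \<Omega> E \<subseteq> sigma_sets \<Omega> (cyl G ` M)" by (rule sigma_sets_mono)
  then show "sigma_sets \<Omega> E \<subseteq> sets \<mu>S" using S.st' by simp
  have "cyl G ` M \<subseteq> E"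
  proof
    fix A assume "A \<in> cyl G ` M"
    then obtain l where l: "l \<in> M" "A = cyl G l" by blast
    then have "A = \<Omega> \<inter> \<Inter> (cyl G ` {l})" using cyl_sub by auto
    then show "A \<in> E" unfolding E_def using l by blast
  qed
  then have "sigma_sets \<Omega> (cyl G ` M) \<subseteq> sigma_sets \<Omega> E" by (rule sigma_sets_mono')
  then show "sets \<mu>S \<subseteq> sigma_sets \<Omega> E" using S.st' by simp
qed

lemma E_genT: "sets \<mu>T = sigma_sets \<Omega> E" using E_gen stST by simp


lemma E_comm_aux: assumes "finite F" shows "F \<subseteq> M \<longrightarrow> (\<forall>g\<in>L2 \<mu>S.
   AE x in \<mu>T. U (\<lambda>y. indicator (\<Omega> \<inter> \<Inter> (cyl G ` F)) y * g y) x = indicator (\<Omega> \<inter> \<Inter> (cyl G ` F)) x * U g x)"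
  using assms
proof (induction F rule: finite_induct)
  case empty
  show ?case
  proof (intro impI ballI)
    fix g assume g: "g \<in> L2 \<mu>S"
    have L: "(\<lambda>y. indicator \<Omega> y * g y) \<in> L2 \<mu>S" using L2_ind[OF g S.Om_sets] .
    have "AE x in \<mu>S. indicator \<Omega> x * g x = g x" by (rule AE_I2) (simp add: spS)
    then have "AE x in \<mu>T. U (\<lambda>y. indicator \<Omega> y * g y) x = U g x" by (rule U2[OF L g])
    then show "AE x in \<mu>T. U (\<lambda>y. indicator (\<Omega> \<inter> \<Inter> (cyl G ` {})) y * g y) x =
       indicator (\<Omega> \<inter> \<Inter> (cyl G ` {})) x * U g x"
      using AE_space by eventually_elim (simp add: spT)
  qed
next
  case (insert a F)
  show ?case
  proof (intro impI ballI)
    assume sub: "insert a F \<subseteq> M"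
    fix g assume g: "g \<in> L2 \<mu>S"
    let ?A = "\<Omega> \<inter> \<Inter> (cyl G ` F)"
    have As: "?A \<in> sets \<mu>S" using finINT_sets[OF insert(1)] .
    have gA: "(\<lambda>y. indicator ?A y * g y) \<in> L2 \<mu>S" using L2_ind[OF g As] .
    have IH: "AE x in \<mu>T. U (\<lambda>y. indicator ?A y * g y) x = indicator ?A x * U g x"
      using insert(3) sub g by auto
    have a: "a \<in> M" using sub by auto
    have C: "AE x in \<mu>T. U (\<lambda>y. indicator (cyl G a) y * (indicator ?A y * g y)) x = indicator (cyl G a) x * U (\<lambda>y. indicator ?A y * g y) x"
      using comm[OF a gA] .
    have eqs: "\<Omega> \<inter> \<Inter> (cyl G ` insert a F) = cyl G a \<inter> ?A" by auto
    have fe: "(\<lambda>y. indicator (cyl G a \<inter> ?A) y * g y) = (\<lambda>y. indicator (cyl G a) y * (indicator ?A y * g y))"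
      by (auto simp: fun_eq_iff indicator_def)
    show "AE x in \<mu>T. U (\<lambda>y. indicator (\<Omega> \<inter> \<Inter> (cyl G ` insert a F)) y * g y) x =
       indicator (\<Omega> \<inter> \<Inter> (cyl G ` insert a F)) x * U g x"
      unfolding eqs fe using C IH by eventually_elim (simp add: indicator_def)
  qed
qed

lemma E_comm: "A \<in> E \<Longrightarrow> g \<in> L2 \<mu>S \<Longrightarrow> AE x in \<mu>T. U (\<lambda>y. indicator A y * g y) x = indicator A x * U g x"
  unfolding E_def using E_comm_aux by blast


definition h where "h = U (\<lambda>_. 1)"

lemma one_L2: "(\<lambda>_. 1) \<in> L2 \<mu>S" using L2_const[OF finS] .
lemma h_L2: "h \<in> L2 \<mu>T" unfolding h_def using U1[OF one_L2] .
lemma h_meas[measurable]: "h \<in> borel_measurable \<mu>T" using h_L2 unfolding L2_def by auto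

lemma ind_L2: "A \<in> sets \<mu>S \<Longrightarrow> (\<lambda>y. indicator A y * 1) \<in> L2 \<mu>S" using L2_ind[OF one_L2] .

lemma ind_h: "A \<in> E \<Longrightarrow> AE x in \<mu>T. U (\<lambda>y. indicator A y * 1) x = indicator A x * h x"
  using E_comm[OF _ one_L2] unfolding h_def by blast


lemma meas_eq: "\<mu>S = density \<mu>T (\<lambda>x. ennreal ((cmod (h x))\<^sup>2))"
proof (rule measure_eqI_generator_eq[OF E_IS E_Pow, where A="\<lambda>_. \<Omega>"])
  fix X assume X: "X \<in> E"
  have Xs: "X \<in> sets \<mu>S" using E_sets[OF X] .
  have XT: "X \<in> sets \<mu>T" using E_setsT[OF X] .
  have hx: "(\<lambda>x. indicator X x * h x) \<in> L2 \<mu>T" using L2_ind[OF h_L2 XT] .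
  have "emeasure \<mu>S X = ennreal (measure \<mu>S X)" using finS by (simp add: finite_measure.emeasure_eq_measure)
  also have "measure \<mu>S X = (\<integral>x. indicator X x \<partial>\<mu>S)" using Xs sets.sets_into_space[OF Xs] by (simp add: Int_absorb2)
  also have "\<dots> = (\<integral>x. (cmod (indicator X x * 1))\<^sup>2 \<partial>\<mu>S)"
    by (rule Bochner_Integration.integral_cong) (auto simp: indicator_def)
  also have "\<dots> = (\<integral>x. (cmod (U (\<lambda>y. indicator X y * 1) x))\<^sup>2 \<partial>\<mu>T)" using U4[OF ind_L2[OF Xs]] by simp
  also have "\<dots> = (\<integral>x. (cmod (indicator X x * h x))\<^sup>2 \<partial>\<mu>T)"
  proof (rule integral_cong_AE)
    show "(\<lambda>x. (cmod (U (\<lambda>y. indicator X y * 1) x))\<^sup>2) \<in> borel_measurable \<mu>T"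
      using U1[OF ind_L2[OF Xs]] unfolding L2_def by auto
    show "(\<lambda>x. (cmod (indicator X x * h x))\<^sup>2) \<in> borel_measurable \<mu>T" using hx unfolding L2_def by auto
    show "AE x in \<mu>T. (cmod (U (\<lambda>y. indicator X y * 1) x))\<^sup>2 = (cmod (indicator X x * h x))\<^sup>2"
      using ind_h[OF X] by eventually_elim simp
  qed
  finally have 1: "emeasure \<mu>S X = ennreal (\<integral>x. (cmod (indicator X x * h x))\<^sup>2 \<partial>\<mu>T)" .
  have "emeasure (density \<mu>T (\<lambda>x. ennreal ((cmod (h x))\<^sup>2))) X = (\<integral>\<^sup>+x. ennreal ((cmod (h x))\<^sup>2) * indicator X x \<partial>\<mu>T)"
    by (rule emeasure_density[OF _ XT]) measurable
  also have "\<dots> = (\<integral>\<^sup>+x. ennreal ((cmod (indicator X x * h x))\<^sup>2) \<partial>\<mu>T)"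
    by (rule nn_integral_cong) (auto simp: indicator_def)
  also have "\<dots> = ennreal (\<integral>x. (cmod (indicator X x * h x))\<^sup>2 \<partial>\<mu>T)"
    using hx unfolding L2_def by (intro nn_integral_eq_integral) auto
  finally show "emeasure \<mu>S X = emeasure (density \<mu>T (\<lambda>x. ennreal ((cmod (h x))\<^sup>2))) X" using 1 by simp
next
  show "sets \<mu>S = sigma_sets \<Omega> E" by (rule E_gen)
  show "sets (density \<mu>T (\<lambda>x. ennreal ((cmod (h x))\<^sup>2))) = sigma_sets \<Omega> E" using E_genT by simp
  show "range (\<lambda>_. \<Omega>) \<subseteq> E" using Om_E by auto
  show "(\<Union>i. \<Omega>) = \<Omega>" by simp
  fix i :: nat
  show "emeasure \<mu>S \<Omega> \<noteq> \<infinity>" using finS by (simp add: finite_measure.emeasure_finite)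
qed



lemma Umeas: "g \<in> L2 \<mu>S \<Longrightarrow> U g \<in> borel_measurable \<mu>T" using U1 unfolding L2_def by auto

lemma polar: assumes u: "u \<in> L2 \<mu>S" and v: "v \<in> L2 \<mu>S"
  shows "(\<integral>x. U u x * cnj (U v x) \<partial>\<mu>T) = (\<integral>x. u x * cnj (v x) \<partial>\<mu>S)"
proof -
  have key: "Re (cnj c * (\<integral>x. U u x * cnj (U v x) \<partial>\<mu>T)) = Re (cnj c * (\<integral>x. u x * cnj (v x) \<partial>\<mu>S))" for c
  proof -
    have w: "(\<lambda>y. c * v y + u y) \<in> L2 \<mu>S" using L2_lin[OF v u] .
    have [measurable]: "U u \<in> borel_measurable \<mu>T" "U v \<in> borel_measurable \<mu>T" using Umeas u v by auto
    have "(\<integral>x. (cmod (U (\<lambda>y. c * v y + u y) x))\<^sup>2 \<partial>\<mu>T) = (\<integral>x. (cmod (c * U v x + U u x))\<^sup>2 \<partial>\<mu>T)"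
    proof (rule integral_cong_AE)
      show "(\<lambda>x. (cmod (U (\<lambda>y. c * v y + u y) x))\<^sup>2) \<in> borel_measurable \<mu>T" using Umeas[OF w] by measurable
      show "(\<lambda>x. (cmod (c * U v x + U u x))\<^sup>2) \<in> borel_measurable \<mu>T" by measurable
      show "AE x in \<mu>T. (cmod (U (\<lambda>y. c * v y + u y) x))\<^sup>2 = (cmod (c * U v x + U u x))\<^sup>2"
        using U3[OF v u, of c] by eventually_elim simp
    qed
    then have "(\<integral>x. (cmod (c * U v x + U u x))\<^sup>2 \<partial>\<mu>T) = (\<integral>x. (cmod (c * v x + u x))\<^sup>2 \<partial>\<mu>S)"
      using U4[OF w] by simp
    then show ?thesis
      unfolding int_expand[OF U1[OF u] U1[OF v]] int_expand[OF u v] U4[OF u] U4[OF v] by simp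
  qed
  have "Re (\<integral>x. U u x * cnj (U v x) \<partial>\<mu>T) = Re (\<integral>x. u x * cnj (v x) \<partial>\<mu>S)" using key[of 1] by simp
  moreover have "Im (\<integral>x. U u x * cnj (U v x) \<partial>\<mu>T) = Im (\<integral>x. u x * cnj (v x) \<partial>\<mu>S)" using key[of \<i>] by simp
  ultimately show ?thesis by (simp add: complex_eq_iff)
qed

lemma L2_int: assumes g: "g \<in> L2 \<mu>S" shows "integrable \<mu>S g"
proof -
  interpret finite_measure \<mu>S by (rule finS)
  have [measurable]: "g \<in> borel_measurable \<mu>S" using g unfolding L2_def by auto
  have "integrable \<mu>S (\<lambda>x. 1 + (cmod (g x))\<^sup>2)" using g unfolding L2_def by auto
  then show ?thesis
  proof (rule Bochner_Integration.integrable_bound)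
    show "g \<in> borel_measurable \<mu>S" by measurable
    show "AE x in \<mu>S. norm (g x) \<le> norm (1 + (cmod (g x))\<^sup>2)"
    proof (rule AE_I2)
      fix x
      have a: "2 * (cmod (g x) * 1) \<le> (cmod (g x))\<^sup>2 + 1\<^sup>2" by (rule real_prod_bound)
      have b: "0 \<le> cmod (g x)" by simp
      have "cmod (g x) \<le> 1 + (cmod (g x))\<^sup>2" using a b by (simp del: norm_ge_zero)
      then show "norm (g x) \<le> norm (1 + (cmod (g x))\<^sup>2)" by simp
    qed
  qed
qed

lemma dens_int: assumes g: "g \<in> L2 \<mu>S" and As: "A \<in> sets \<mu>T"
  shows "(\<integral>x. indicator A x * g x \<partial>\<mu>S) = (\<integral>x. (cmod (h x))\<^sup>2 *\<^sub>R (indicator A x * g x) \<partial>\<mu>T)"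
    and "integrable \<mu>T (\<lambda>x. (cmod (h x))\<^sup>2 *\<^sub>R g x)"
proof -
  have gT[measurable]: "g \<in> borel_measurable \<mu>T" using g measST unfolding L2_def by auto
  show "(\<integral>x. indicator A x * g x \<partial>\<mu>S) = (\<integral>x. (cmod (h x))\<^sup>2 *\<^sub>R (indicator A x * g x) \<partial>\<mu>T)"
    by (subst meas_eq, rule integral_density) (use As in auto)
  have "integrable \<mu>S g" using L2_int[OF g] .
  then have "integrable (density \<mu>T (\<lambda>x. ennreal ((cmod (h x))\<^sup>2))) g" using meas_eq by simp
  then show "integrable \<mu>T (\<lambda>x. (cmod (h x))\<^sup>2 *\<^sub>R g x)" by (subst (asm) integrable_density) auto
qed

lemma E_int_zero:
  fixes N :: "('a, 'k) path measure" and F :: "('a, 'k) path \<Rightarrow> complex"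
  assumes "N = \<mu>S \<or> N = \<mu>T" and "integrable N F" and "\<And>A. A \<in> E \<Longrightarrow> (\<integral>x. indicator A x * F x \<partial>N) = 0"
  shows "AE x in N. F x = 0"
proof -
  have "finite_measure N" "sets N = sigma_sets \<Omega> E" "space N = \<Omega>"
    using assms(1) finS finT E_gen E_genT spS spT by auto
  then show ?thesis using vanish_cplx[OF _ _ _ E_IS E_Pow Om_E assms(2,3)] by blast
qed

lemma hnz: "AE x in \<mu>T. h x \<noteq> 0"
proof -
  let ?Z = "{x \<in> space \<mu>T. h x = 0}"
  have Zs: "?Z \<in> sets \<mu>T" by measurable
  have chi: "(\<lambda>x. indicator ?Z x * 1) \<in> L2 \<mu>T" using L2_ind[OF L2_const[OF finT] Zs] .
  obtain g' where g': "g' \<in> L2 \<mu>S" "AE x in \<mu>T. U g' x = indicator ?Z x * 1" using U5[OF chi] by blast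
  have "AE x in \<mu>S. g' x = 0"
  proof (rule E_int_zero)
    show "integrable \<mu>S g'" using L2_int[OF g'(1)] .
    fix A assume A: "A \<in> E"
    have iL: "(\<lambda>y. indicator A y * 1) \<in> L2 \<mu>S" using ind_L2[OF E_sets[OF A]] .
    have "(\<integral>x. indicator A x * g' x \<partial>\<mu>S) = (\<integral>x. g' x * cnj (indicator A x * 1) \<partial>\<mu>S)"
      by (rule Bochner_Integration.integral_cong) (auto simp: indicator_def)
    also have "\<dots> = (\<integral>x. U g' x * cnj (U (\<lambda>y. indicator A y * 1) x) \<partial>\<mu>T)" using polar[OF g'(1) iL] by simp
    also have "\<dots> = (\<integral>x. 0 \<partial>\<mu>T)"
    proof (rule integral_cong_AE)
      show "(\<lambda>x. U g' x * cnj (U (\<lambda>y. indicator A y * 1) x)) \<in> borel_measurable \<mu>T"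
        using Umeas[OF g'(1)] Umeas[OF iL] by measurable
      show "AE x in \<mu>T. U g' x * cnj (U (\<lambda>y. indicator A y * 1) x) = 0"
        using g'(2) ind_h[OF A] by eventually_elim (auto simp: indicator_def)
    qed simp
    finally show "(\<integral>x. indicator A x * g' x \<partial>\<mu>S) = 0" by simp
  qed simp
  then have "AE x in \<mu>T. U g' x = U (\<lambda>_. 0) x" by (rule U2[OF g'(1) L2_zero])
  then show ?thesis using U0 g'(2) AE_space by eventually_elim (auto simp: indicator_def)
qed


lemma mult_lemma: assumes g: "g \<in> L2 \<mu>S"
  shows "AE x in \<mu>T. U g x * cnj (h x) - (cmod (h x))\<^sup>2 *\<^sub>R g x = 0"
proof (rule E_int_zero)
  have i1: "integrable \<mu>T (\<lambda>x. U g x * cnj (h x))" using L2_prod[OF U1[OF g] h_L2] .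
  have i2: "integrable \<mu>T (\<lambda>x. (cmod (h x))\<^sup>2 *\<^sub>R g x)" using dens_int(2)[OF g S.Om_sets[unfolded stST]] .
  show "integrable \<mu>T (\<lambda>x. U g x * cnj (h x) - (cmod (h x))\<^sup>2 *\<^sub>R g x)" using i1 i2 by auto
  fix A assume A: "A \<in> E"
  have AT: "A \<in> sets \<mu>T" using E_setsT[OF A] .
  have AS: "A \<in> sets \<mu>S" using E_sets[OF A] .
  have iL: "(\<lambda>y. indicator A y * 1) \<in> L2 \<mu>S" using ind_L2[OF AS] .
  have gA: "(\<lambda>y. indicator A y * g y) \<in> L2 \<mu>S" using L2_ind[OF g AS] .
  have G1: "integrable \<mu>T (\<lambda>x. U g x * cnj (indicator A x * h x))" using L2_prod[OF U1[OF g] L2_ind[OF h_L2 AT]] .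
  have G2: "integrable \<mu>T (\<lambda>x. (cmod (h x))\<^sup>2 *\<^sub>R (indicator A x * g x))" using dens_int(2)[OF gA AT] .
  have "(\<integral>x. indicator A x * (U g x * cnj (h x) - (cmod (h x))\<^sup>2 *\<^sub>R g x) \<partial>\<mu>T) =
      (\<integral>x. U g x * cnj (indicator A x * h x) - (cmod (h x))\<^sup>2 *\<^sub>R (indicator A x * g x) \<partial>\<mu>T)"
    by (rule Bochner_Integration.integral_cong) (auto simp: indicator_def)
  also have "\<dots> = (\<integral>x. U g x * cnj (indicator A x * h x) \<partial>\<mu>T) - (\<integral>x. (cmod (h x))\<^sup>2 *\<^sub>R (indicator A x * g x) \<partial>\<mu>T)"
    by (rule Bochner_Integration.integral_diff[OF G1 G2])
  finally have D: "(\<integral>x. indicator A x * (U g x * cnj (h x) - (cmod (h x))\<^sup>2 *\<^sub>R g x) \<partial>\<mu>T) =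
     (\<integral>x. U g x * cnj (indicator A x * h x) \<partial>\<mu>T) - (\<integral>x. (cmod (h x))\<^sup>2 *\<^sub>R (indicator A x * g x) \<partial>\<mu>T)" .
  have "(\<integral>x. U g x * cnj (indicator A x * h x) \<partial>\<mu>T) = (\<integral>x. U g x * cnj (U (\<lambda>y. indicator A y * 1) x) \<partial>\<mu>T)"
  proof (rule integral_cong_AE)
    show "(\<lambda>x. U g x * cnj (indicator A x * h x)) \<in> borel_measurable \<mu>T" using G1 by auto
    show "(\<lambda>x. U g x * cnj (U (\<lambda>y. indicator A y * 1) x)) \<in> borel_measurable \<mu>T"
      using Umeas[OF g] Umeas[OF iL] by measurable
    show "AE x in \<mu>T. U g x * cnj (indicator A x * h x) = U g x * cnj (U (\<lambda>y. indicator A y * 1) x)"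
      using ind_h[OF A] by eventually_elim simp
  qed
  also have "\<dots> = (\<integral>x. g x * cnj (indicator A x * 1) \<partial>\<mu>S)" using polar[OF g iL] .
  also have "\<dots> = (\<integral>x. indicator A x * g x \<partial>\<mu>S)"
    by (rule Bochner_Integration.integral_cong) (auto simp: indicator_def)
  also have "\<dots> = (\<integral>x. (cmod (h x))\<^sup>2 *\<^sub>R (indicator A x * g x) \<partial>\<mu>T)" using dens_int(1)[OF g AT] .
  finally show "(\<integral>x. indicator A x * (U g x * cnj (h x) - (cmod (h x))\<^sup>2 *\<^sub>R g x) \<partial>\<mu>T) = 0" using D by simp
qed simp


lemma Umult: assumes g: "g \<in> L2 \<mu>S" shows "AE x in \<mu>T. U g x = h x * g x"
  using mult_lemma[OF g] hnz
proof eventually_elim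
  case (elim x)
  have "U g x * cnj (h x) = complex_of_real ((cmod (h x))\<^sup>2) * g x" using elim(1) by (simp add: scaleR_conv_of_real)
  also have "\<dots> = h x * cnj (h x) * g x" by (simp only: complex_norm_square)
  finally have "U g x * cnj (h x) = (h x * g x) * cnj (h x)" by (simp add: algebra_simps)
  then show ?case using elim(2) by simp
qed


lemma null_eq: "null_sets \<mu>S = null_sets \<mu>T"
proof -
  have hm': "(\<lambda>x. ennreal ((cmod (h x))\<^sup>2)) \<in> borel_measurable \<mu>T" by measurable
  have D: "null_sets \<mu>S = null_sets (density \<mu>T (\<lambda>x. ennreal ((cmod (h x))\<^sup>2)))" using meas_eq by (rule arg_cong)
  show ?thesis
  proof (intro set_eqI iffI)
    fix N
    assume "N \<in> null_sets \<mu>S"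
    then have "N \<in> null_sets (density \<mu>T (\<lambda>x. ennreal ((cmod (h x))\<^sup>2)))" using D by simp
    then have N: "N \<in> sets \<mu>T" "AE x in \<mu>T. x \<in> N \<longrightarrow> ennreal ((cmod (h x))\<^sup>2) = 0"
      using null_sets_density_iff[OF hm'] by blast+
    have "AE x in \<mu>T. x \<notin> N" using N(2) hnz by eventually_elim auto
    then show "N \<in> null_sets \<mu>T" using AE_iff_null_sets[OF N(1)] by simp
  next
    fix N
    assume N: "N \<in> null_sets \<mu>T"
    then have "AE x in \<mu>T. x \<notin> N" using AE_iff_null_sets[of N \<mu>T] by auto
    then have "AE x in \<mu>T. x \<in> N \<longrightarrow> ennreal ((cmod (h x))\<^sup>2) = 0" by (rule AE_mp) (rule AE_I2, auto)
    then have "N \<in> null_sets (density \<mu>T (\<lambda>x. ennreal ((cmod (h x))\<^sup>2)))"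
      using null_sets_density_iff[OF hm'] N by auto
    then show "N \<in> null_sets \<mu>S" using D by simp
  qed
qed


lemma fS_rel: assumes l: "l \<in> M" shows "AE x in \<mu>T. fS l x = h (shift (d l) x) / h x * fT l x"
proof -
  have r1: "rep_op G fS l (\<lambda>_. 1) = fS l" by (auto simp: rep_op_def)
  have "AE x in \<mu>T. U (fS l) x = fT l x * h (shift (d l) x)"
    using U6[OF l one_L2] unfolding r1 by (simp add: rep_op_def h_def)
  then show ?thesis using Umult[OF S.f_L2[OF l]] hnz
    by eventually_elim (auto simp: field_simps)
qed


end

theorem mainTheorem13:
  fixes G :: "('a, 'k::finite) kgraph"
    and \<mu>S \<mu>T :: "('a, 'k) path measure"
    and fS fT :: "'a \<Rightarrow> ('a, 'k) path \<Rightarrow> complex"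
  assumes "kgraph G" and "finite_kgraph G" and "no_sources G"
    and "proj_system G \<mu>S fS" and "proj_system G \<mu>T fT"
  shows "unitarily_equiv G \<mu>S fS \<mu>T fT \<longleftrightarrow>
         (null_sets \<mu>S = null_sets \<mu>T \<and>
          (\<exists>h :: ('a, 'k) path \<Rightarrow> complex. h \<in> borel_measurable \<mu>T \<and>
             \<mu>S = density \<mu>T (\<lambda>x. ennreal ((cmod (h x))\<^sup>2)) \<and>
             (\<forall>l\<in>mor G. AE x in \<mu>T.
                 fS l x = h (shift (deg G l) x) / h x * fT l x)))"
proof -
  interpret two G \<mu>S \<mu>T fS fT by unfold_locales (rule assms)+
  show ?thesis
  proof
    assume "unitarily_equiv G \<mu>S fS \<mu>T fT"
    then obtain U where H:
       "\<forall>g\<in>L2 \<mu>S. U g \<in> L2 \<mu>T"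
       "\<forall>g\<in>L2 \<mu>S. \<forall>g'\<in>L2 \<mu>S. (AE x in \<mu>S. g x = g' x) \<longrightarrow> (AE x in \<mu>T. U g x = U g' x)"
       "\<forall>g\<in>L2 \<mu>S. \<forall>g'\<in>L2 \<mu>S. \<forall>c. AE x in \<mu>T. U (\<lambda>y. c * g y + g' y) x = c * U g x + U g' x"
       "\<forall>g\<in>L2 \<mu>S. (\<integral>x. (cmod (U g x))\<^sup>2 \<partial>\<mu>T) = (\<integral>x. (cmod (g x))\<^sup>2 \<partial>\<mu>S)"
       "\<forall>g\<in>L2 \<mu>T. \<exists>g'\<in>L2 \<mu>S. AE x in \<mu>T. U g' x = g x"
       "\<forall>l\<in>mor G. \<forall>g\<in>L2 \<mu>S. AE x in \<mu>T. U (rep_op G fS l g) x = rep_op G fT l (U g) x"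
      unfolding unitarily_equiv_def by blast
    interpret F: fwd G \<mu>S \<mu>T fS fT U
    proof (unfold_locales)
      show "\<And>g. g \<in> L2 \<mu>S \<Longrightarrow> U g \<in> L2 \<mu>T" using H(1) by blast
      show "\<And>g g'. g \<in> L2 \<mu>S \<Longrightarrow> g' \<in> L2 \<mu>S \<Longrightarrow> AE x in \<mu>S. g x = g' x \<Longrightarrow> AE x in \<mu>T. U g x = U g' x"
        using H(2) by blast
      show "\<And>g g' c. g \<in> L2 \<mu>S \<Longrightarrow> g' \<in> L2 \<mu>S \<Longrightarrow> AE x in \<mu>T. U (\<lambda>y. c * g y + g' y) x = c * U g x + U g' x"
        using H(3) by blast
      show "\<And>g. g \<in> L2 \<mu>S \<Longrightarrow> (\<integral>x. (cmod (U g x))\<^sup>2 \<partial>\<mu>T) = (\<integral>x. (cmod (g x))\<^sup>2 \<partial>\<mu>S)"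
        using H(4) by blast
      show "\<And>g. g \<in> L2 \<mu>T \<Longrightarrow> \<exists>g'\<in>L2 \<mu>S. AE x in \<mu>T. U g' x = g x" using H(5) by blast
      show "\<And>l g. l \<in> mor G \<Longrightarrow> g \<in> L2 \<mu>S \<Longrightarrow> AE x in \<mu>T. U (rep_op G fS l g) x = rep_op G fT l (U g) x"
        using H(6) by blast
    qed
    show "null_sets \<mu>S = null_sets \<mu>T \<and>
          (\<exists>h :: ('a, 'k) path \<Rightarrow> complex. h \<in> borel_measurable \<mu>T \<and>
             \<mu>S = density \<mu>T (\<lambda>x. ennreal ((cmod (h x))\<^sup>2)) \<and>
             (\<forall>l\<in>mor G. AE x in \<mu>T.
                 fS l x = h (shift (deg G l) x) / h x * fT l x))"
      using F.null_eq F.h_meas F.meas_eq F.fS_rel by blast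
  next
    assume "null_sets \<mu>S = null_sets \<mu>T \<and>
          (\<exists>h :: ('a, 'k) path \<Rightarrow> complex. h \<in> borel_measurable \<mu>T \<and>
             \<mu>S = density \<mu>T (\<lambda>x. ennreal ((cmod (h x))\<^sup>2)) \<and>
             (\<forall>l\<in>mor G. AE x in \<mu>T.
                 fS l x = h (shift (deg G l) x) / h x * fT l x))"
    then show "unitarily_equiv G \<mu>S fS \<mu>T fT" using reverse_dir by blast
  qed
qed


end
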